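(* Fix $T>0$ and $\rho\in[0,T)$. Let $\xi\in C([\rho,T];PC^{(2),1}[0,1])$ satisfy $\alpha_0\xi_x(0,t)+\beta_0\xi(0,t)=0$ for all $t\in[\rho,T]$, and set $f_\xi(t)=\alpha_1\xi_x(1,t)+\beta_1\xi(1,t)$. Assume that for every $t\in[\rho,T]$ the set of points at which $\xi_{xx}(\cdot,t)$ is not differentiable is a subset of $\mathcal I$. Then there exists $C>0$ independent of $\xi$ and $n$ such that for all sufficiently large $n$, $$\sup_{t\in[\rho,T]}\big\|R_n\mathscr P\xi(\cdot,t)-P_nR_n\xi(\cdot,t)-B_nf_\xi(t)\big\|_{2d}\le C\sqrt h\sup_{t\in[\rho,T]}\|\xi(\cdot,t)\|_{PC^{(2),1}[0,1]},$$ where $h=1/(n+1)$.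
   Context: A function $\psi:[0,1]\to\mathbb R$ belongs to $PC^k[0,1]$ if there is a finite partition of $[0,1]$ into disjoint intervals such that on each of them $\psi$ is the restriction of some $C^k[0,1]$ function; $\|\psi\|_{PC^k[0,1]}$ is the supremum of $\|\psi\|_{C^k[a,b]}$ over all intervals $[a,b]\subset[0,1]$ on which $\psi$ is $k$ times continuously differentiable; $PC[0,1]=PC^0[0,1]$. $PC^{(2),1}[0,1]$ is the set of $\psi\in C^1[0,1]\cap H^2(0,1)$ with $\psi_{xx}\in PC^1[0,1]$, with norm $\|\psi\|_{PC^{(2),1}[0,1]}=\|\psi\|_{C^1[0,1]}+\|\psi_{xx}\|_{PC^1[0,1]}$. Standing assumptions: $\theta,\sigma,\lambda\in PC^1[0,1]$ with $\inf_{x\in[0,1]}\theta(x)>0$; $\varphi\in C^1([0,1];C^1[0,1])$ is a kernel $\varphi(x,\tilde x)$; $\alpha_0,\beta_0,\alpha_1,\beta_1$ are real constants. $\mathcal I$ is the set of all points of $[0,1]$ at which at least one of $\theta,\sigma,\lambda$ is not differentiable. For $w\in H^2(0,1)$, $\mathscr Pw(x)=\theta(x)w_{xx}(x)+\sigma(x)w_x(x)+\lambda(x)w(x)+\int_0^x\varphi(x,\tilde x)w(\tilde x)d\tilde x$. Discretization: for $n\ge1$ let $h=1/(n+1)$, $r_0=\alpha_0/(3\alpha_0-2h\beta_0)$, $r_1=\alpha_1/(3\alpha_1+2h\beta_1)$, $q_0=-\beta_0/(\alpha_0-h\beta_0)$, $b_n=2h\theta(nh)/(3\alpha_1+2h\beta_1)$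 (assumed well defined for all $n$). Define $n\times n$ matrices $\Theta_n=\mathrm{diag}(\theta(h),\dots,\theta(nh))$, $\Sigma_n=\mathrm{diag}(\sigma(h),\dots,\sigma(nh))$, $\Lambda_n=\mathrm{diag}(\lambda(h),\dots,\lambda(nh))$; $L_n=h^{-2}M$ where $M$ is tridiagonal with diagonal entries $-2$ except $M_{11}=4r_0-2$, $M_{nn}=4r_1-2$, superdiagonal entries $1$ except $M_{12}=1-r_0$, subdiagonal entries $1$ except $M_{n,n-1}=1-r_1$; $D_n=h^{-1}N$ where $N_{11}=hq_0$, $N_{1j}=0$ for $j\ge2$, and for $i\ge2$: $N_{ii}=1$, $N_{i,i-1}=-1$, other entries $0$; $\Phi_n$ is lower triangular with $(\Phi_n)_{jm}=h\varphi(jh,mh)$ for $m\le j$. Set $P_n=\Theta_nL_n+\Sigma_nD_n+\Lambda_n+\Phi_n$ and $B_n=h^{-2}(0,\dots,0,b_n)^\top\in\mathbb R^n$. For $v\in\mathbb R^n$, $\|v\|_{2d}=\sqrt h\,\|v\|_2$ (Euclidean norm). For $z\in PC[0,1]$, $R_nz=(z(h),z(2h),\dots,z(nh))^\top$. *)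

theory Defs
  imports "HOL-Analysis.Analysis"
begin

definition Ck_chain :: "nat \<Rightarrow> (real \<Rightarrow> real) \<Rightarrow> real set \<Rightarrow> (nat \<Rightarrow> real \<Rightarrow> real) \<Rightarrow> bool" where
  "Ck_chain k f S D \<longleftrightarrow> D 0 = f \<and> (\<forall>j\<le>k. continuous_on S (D j)) \<and>
     (\<forall>j<k. \<forall>x\<in>S. (D j has_real_derivative D (Suc j) x) (at x within S))"

definition Ck_on :: "nat \<Rightarrow> (real \<Rightarrow> real) \<Rightarrow> real set \<Rightarrow> bool" where
  "Ck_on k f S \<longleftrightarrow> (\<exists>D. Ck_chain k f S D)"

text \<open>C^k norm on S: sum over j \<le> k of sup |f^(j)|. (On a nondegenerate interval the
  derivatives are unique; the Inf only matters for degenerate intervals [a,a], where it gives |f a|.)\<close>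
definition Ck_norm :: "nat \<Rightarrow> (real \<Rightarrow> real) \<Rightarrow> real set \<Rightarrow> real" where
  "Ck_norm k f S = Inf {(\<Sum>j\<le>k. (SUP x\<in>S. \<bar>D j x\<bar>)) | D. Ck_chain k f S D}"

definition PCk :: "nat \<Rightarrow> (real \<Rightarrow> real) \<Rightarrow> bool" where
  "PCk k \<psi> \<longleftrightarrow> (\<exists>P. finite P \<and> \<Union>P = {0..1} \<and> pairwise disjnt P \<and>
     (\<forall>I\<in>P. is_interval I \<and> (\<exists>g. Ck_on k g {0..1} \<and> (\<forall>x\<in>I. \<psi> x = g x))))"

definition PCk_norm :: "nat \<Rightarrow> (real \<Rightarrow> real) \<Rightarrow> real" where
  "PCk_norm k \<psi> = Sup {Ck_norm k \<psi> {a..b} | a b. 0 \<le> a \<and> a \<le> b \<and> b \<le> 1 \<and> Ck_on k \<psi> {a..b}}"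

text \<open>PC^{(2),1}[0,1]: \<psi> \<in> C^1[0,1] with derivative \<psi>x, \<psi> \<in> H^2(0,1) with second (weak)
  derivative \<psi>xx, i.e. \<psi>x(x) = \<psi>x(0) + \<integral>_0^x \<psi>xx, and \<psi>xx \<in> PC^1[0,1].\<close>
definition PC21 :: "(real \<Rightarrow> real) \<Rightarrow> (real \<Rightarrow> real) \<Rightarrow> (real \<Rightarrow> real) \<Rightarrow> bool" where
  "PC21 \<psi> \<psi>x \<psi>xx \<longleftrightarrow> Ck_on 1 \<psi> {0..1} \<and>
     (\<forall>x\<in>{0..1}. (\<psi> has_real_derivative \<psi>x x) (at x within {0..1})) \<and>
     (\<forall>x\<in>{0..1}. (\<psi>xx has_integral (\<psi>x x - \<psi>x 0)) {0..x}) \<and>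
     PCk 1 \<psi>xx"

definition PC21_norm :: "(real \<Rightarrow> real) \<Rightarrow> (real \<Rightarrow> real) \<Rightarrow> real" where
  "PC21_norm \<psi> \<psi>xx = Ck_norm 1 \<psi> {0..1} + PCk_norm 1 \<psi>xx"

text \<open>Kernel \<phi> \<in> C^1([0,1]; C^1[0,1]), \<phi>(x,x') = \<phi> x x'.\<close>
definition kernel_C1C1 :: "(real \<Rightarrow> real \<Rightarrow> real) \<Rightarrow> bool" where
  "kernel_C1C1 \<phi> \<longleftrightarrow> (\<exists>\<Phi>'. (\<forall>x\<in>{0..1}. Ck_on 1 (\<phi> x) {0..1} \<and> Ck_on 1 (\<Phi>' x) {0..1}) \<and>
     (\<forall>x\<in>{0..1}. ((\<lambda>y. Ck_norm 1 (\<lambda>s. \<phi> y s - \<phi> x s - (y - x) * \<Phi>' x s) {0..1} / \<bar>y - x\<bar>)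
                     \<longlongrightarrow> 0) (at x within {0..1})) \<and>
     (\<forall>x\<in>{0..1}. ((\<lambda>y. Ck_norm 1 (\<lambda>s. \<Phi>' y s - \<Phi>' x s) {0..1}) \<longlongrightarrow> 0) (at x within {0..1})))"

definition Iset :: "(real \<Rightarrow> real) \<Rightarrow> (real \<Rightarrow> real) \<Rightarrow> (real \<Rightarrow> real) \<Rightarrow> real set" where
  "Iset \<theta> \<sigma> lam = {x\<in>{0..1}. \<not> \<theta> differentiable (at x within {0..1}) \<or>
       \<not> \<sigma> differentiable (at x within {0..1}) \<or> \<not> lam differentiable (at x within {0..1})}"

definition Pop :: "(real \<Rightarrow> real) \<Rightarrow> (real \<Rightarrow> real) \<Rightarrow> (real \<Rightarrow> real) \<Rightarrow> (real \<Rightarrow> real \<Rightarrow> real)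
     \<Rightarrow> (real \<Rightarrow> real) \<Rightarrow> (real \<Rightarrow> real) \<Rightarrow> (real \<Rightarrow> real) \<Rightarrow> real \<Rightarrow> real" where
  "Pop \<theta> \<sigma> lam \<phi> w wx wxx x = \<theta> x * wxx x + \<sigma> x * wx x + lam x * w x
      + integral {0..x} (\<lambda>s. \<phi> x s * w s)"

section \<open>Discretization (vectors/matrices indexed by 1..n)\<close>

definition hstep :: "nat \<Rightarrow> real" where "hstep n = 1 / (real n + 1)"

definition r0 :: "real \<Rightarrow> real \<Rightarrow> nat \<Rightarrow> real" where
  "r0 \<alpha>0 \<beta>0 n = \<alpha>0 / (3 * \<alpha>0 - 2 * hstep n * \<beta>0)"
definition r1 :: "real \<Rightarrow> real \<Rightarrow> nat \<Rightarrow> real" where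
  "r1 \<alpha>1 \<beta>1 n = \<alpha>1 / (3 * \<alpha>1 + 2 * hstep n * \<beta>1)"
definition q0 :: "real \<Rightarrow> real \<Rightarrow> nat \<Rightarrow> real" where
  "q0 \<alpha>0 \<beta>0 n = - \<beta>0 / (\<alpha>0 - hstep n * \<beta>0)"
definition bn :: "(real \<Rightarrow> real) \<Rightarrow> real \<Rightarrow> real \<Rightarrow> nat \<Rightarrow> real" where
  "bn \<theta> \<alpha>1 \<beta>1 n = 2 * hstep n * \<theta> (real n * hstep n) / (3 * \<alpha>1 + 2 * hstep n * \<beta>1)"

definition Mmat :: "real \<Rightarrow> real \<Rightarrow> real \<Rightarrow> real \<Rightarrow> nat \<Rightarrow> nat \<Rightarrow> nat \<Rightarrow> real" where
  "Mmat \<alpha>0 \<beta>0 \<alpha>1 \<beta>1 n i j =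
     (if i = j then (if i = 1 then 4 * r0 \<alpha>0 \<beta>0 n - 2 else if i = n then 4 * r1 \<alpha>1 \<beta>1 n - 2 else -2)
      else if j = i + 1 then (if i = 1 then 1 - r0 \<alpha>0 \<beta>0 n else 1)
      else if i = j + 1 then (if i = n then 1 - r1 \<alpha>1 \<beta>1 n else 1)
      else 0)"

definition Lmat :: "real \<Rightarrow> real \<Rightarrow> real \<Rightarrow> real \<Rightarrow> nat \<Rightarrow> nat \<Rightarrow> nat \<Rightarrow> real" where
  "Lmat \<alpha>0 \<beta>0 \<alpha>1 \<beta>1 n i j = Mmat \<alpha>0 \<beta>0 \<alpha>1 \<beta>1 n i j / (hstep n)\<^sup>2"

definition Nmat :: "real \<Rightarrow> real \<Rightarrow> nat \<Rightarrow> nat \<Rightarrow> nat \<Rightarrow> real" where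
  "Nmat \<alpha>0 \<beta>0 n i j =
     (if i = 1 then (if j = 1 then hstep n * q0 \<alpha>0 \<beta>0 n else 0)
      else if j = i then 1 else if j + 1 = i then -1 else 0)"

definition Dmat :: "real \<Rightarrow> real \<Rightarrow> nat \<Rightarrow> nat \<Rightarrow> nat \<Rightarrow> real" where
  "Dmat \<alpha>0 \<beta>0 n i j = Nmat \<alpha>0 \<beta>0 n i j / hstep n"

definition Phimat :: "(real \<Rightarrow> real \<Rightarrow> real) \<Rightarrow> nat \<Rightarrow> nat \<Rightarrow> nat \<Rightarrow> real" where
  "Phimat \<phi> n j m = (if m \<le> j then hstep n * \<phi> (real j * hstep n) (real m * hstep n) else 0)"

definition Pmat :: "(real \<Rightarrow> real) \<Rightarrow> (real \<Rightarrow> real) \<Rightarrow> (real \<Rightarrow> real) \<Rightarrow> (real \<Rightarrow> real \<Rightarrow> real)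
     \<Rightarrow> real \<Rightarrow> real \<Rightarrow> real \<Rightarrow> real \<Rightarrow> nat \<Rightarrow> nat \<Rightarrow> nat \<Rightarrow> real" where
  "Pmat \<theta> \<sigma> lam \<phi> \<alpha>0 \<beta>0 \<alpha>1 \<beta>1 n i j =
     \<theta> (real i * hstep n) * Lmat \<alpha>0 \<beta>0 \<alpha>1 \<beta>1 n i j
     + \<sigma> (real i * hstep n) * Dmat \<alpha>0 \<beta>0 n i j
     + (if i = j then lam (real i * hstep n) else 0)
     + Phimat \<phi> n i j"

definition Bvec :: "(real \<Rightarrow> real) \<Rightarrow> real \<Rightarrow> real \<Rightarrow> nat \<Rightarrow> nat \<Rightarrow> real" where
  "Bvec \<theta> \<alpha>1 \<beta>1 n i = (if i = n then bn \<theta> \<alpha>1 \<beta>1 n / (hstep n)\<^sup>2 else 0)"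

definition Rn :: "nat \<Rightarrow> (real \<Rightarrow> real) \<Rightarrow> nat \<Rightarrow> real" where
  "Rn n z i = z (real i * hstep n)"

definition matvec :: "nat \<Rightarrow> (nat \<Rightarrow> nat \<Rightarrow> real) \<Rightarrow> (nat \<Rightarrow> real) \<Rightarrow> nat \<Rightarrow> real" where
  "matvec n A v i = (\<Sum>j=1..n. A i j * v j)"

definition norm2d :: "nat \<Rightarrow> (nat \<Rightarrow> real) \<Rightarrow> real" where
  "norm2d n v = sqrt (hstep n) * sqrt (\<Sum>i=1..n. (v i)\<^sup>2)"

end

theory Submission
  imports Defs
begin

lemma deriv_unique_Icc:
  fixes f :: "real \<Rightarrow> real"
  assumes "a < b" "x \<in> {a..b}"
    "(f has_real_derivative d1) (at x within {a..b})"
    "(f has_real_derivative d2) (at x within {a..b})"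
  shows "d1 = d2"
  using vector_derivative_unique_within_closed_interval[of a b x f d1 d2] assms
  by (simp add: has_real_derivative_iff_has_vector_derivative)

lemma chain_bounded:
  assumes "Ck_chain k f {a..b} D" "j \<le> k"
  shows "\<exists>B. \<forall>x\<in>{a..b}. \<bar>D j x\<bar> \<le> B"
proof -
  have "continuous_on {a..b} (D j)" using assms unfolding Ck_chain_def by auto
  then have "compact (D j ` {a..b})" by (rule compact_continuous_image) simp
  then obtain B where "\<forall>y\<in>D j ` {a..b}. norm y \<le> B" using compact_imp_bounded bounded_iff by metis
  then show ?thesis by auto
qed

lemma chain_sup_ge:
  assumes "Ck_chain k f {a..b} D" "j \<le> k" "x \<in> {a..b}"
  shows "\<bar>D j x\<bar> \<le> (SUP y\<in>{a..b}. \<bar>D j y\<bar>)"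
proof -
  obtain B where B: "\<forall>x\<in>{a..b}. \<bar>D j x\<bar> \<le> B" using chain_bounded[OF assms(1,2)] by blast
  show ?thesis using assms(3) B by (intro cSUP_upper) (auto intro!: bdd_aboveI2[where M=B])
qed

lemma chain_sup_nonneg:
  assumes "Ck_chain k f {a..b} D" "j \<le> k" "a \<le> b"
  shows "0 \<le> (SUP y\<in>{a..b}. \<bar>D j y\<bar>)"
  using chain_sup_ge[OF assms(1,2), of a] assms(3) by force

lemma chain_sup_le:
  fixes D :: "nat \<Rightarrow> real \<Rightarrow> real"
  assumes "a \<le> b" "\<And>y. y\<in>{a..b} \<Longrightarrow> \<bar>D j y\<bar> \<le> B"
  shows "(SUP y\<in>{a..b}. \<bar>D j y\<bar>) \<le> B"
  apply (rule cSUP_least) using assms by auto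

lemma chain_normsum_nonneg:
  assumes "Ck_chain k f {a..b} D" "a \<le> b"
  shows "0 \<le> (\<Sum>j\<le>k. (SUP x\<in>{a..b}. \<bar>D j x\<bar>))"
  using assms by (intro sum_nonneg) (auto intro: chain_sup_nonneg)

lemma Ck_norm_le_chain:
  assumes "Ck_chain k f {a..b} D" "a \<le> b"
  shows "Ck_norm k f {a..b} \<le> (\<Sum>j\<le>k. (SUP x\<in>{a..b}. \<bar>D j x\<bar>))"
  unfolding Ck_norm_def
  apply (rule cInf_lower)
  using assms by (auto intro!: bdd_belowI[where m=0] chain_normsum_nonneg)

lemma Ck_norm_ge:
  assumes "Ck_on k f {a..b}" "a \<le> b" "x \<in> {a..b}" "j \<le> k"
   "\<And>D. Ck_chain k f {a..b} D \<Longrightarrow> D j x = c"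
  shows "\<bar>c\<bar> \<le> Ck_norm k f {a..b}"
  unfolding Ck_norm_def
proof (rule cInf_greatest)
  show "{\<Sum>j\<le>k. SUP x\<in>{a..b}. \<bar>D j x\<bar> |D. Ck_chain k f {a..b} D} \<noteq> {}"
    using assms(1) unfolding Ck_on_def by auto
next
  fix s assume "s \<in> {\<Sum>j\<le>k. SUP x\<in>{a..b}. \<bar>D j x\<bar> |D. Ck_chain k f {a..b} D}"
  then obtain D where D: "Ck_chain k f {a..b} D" and s: "s = (\<Sum>j\<le>k. SUP x\<in>{a..b}. \<bar>D j x\<bar>)"
    by auto
  have "\<bar>c\<bar> = \<bar>D j x\<bar>" using assms(5)[OF D] by simp
  also have "\<dots> \<le> (SUP x\<in>{a..b}. \<bar>D j x\<bar>)" using chain_sup_ge[OF D assms(4,3)] .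
  also have "\<dots> \<le> s" unfolding s
    using assms(4) D assms(2) by (intro member_le_sum) (auto intro: chain_sup_nonneg)
  finally show "\<bar>c\<bar> \<le> s" .
qed

lemma Ck_norm_nonneg:
  assumes "Ck_on k f {a..b}" "a \<le> b"
  shows "0 \<le> Ck_norm k f {a..b}"
proof -
  have "\<bar>f a\<bar> \<le> Ck_norm k f {a..b}"
    using assms by (intro Ck_norm_ge[where j=0 and x=a]) (auto simp: Ck_chain_def)
  then show ?thesis by linarith
qed

lemma Ck_chain_point: "Ck_chain 1 f {a..a} (\<lambda>j. if j = 0 then f else (\<lambda>_. 0))"
  unfolding Ck_chain_def
  by (auto simp: has_field_derivative_def has_derivative_within_singleton_iff bounded_linear_mult_right)

lemma chain_lin:
  assumes "Ck_chain k f S D" "Ck_chain k g S E"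
  shows "Ck_chain k (\<lambda>x. f x + c * g x) S (\<lambda>j x. D j x + c * E j x)"
  using assms unfolding Ck_chain_def
  by (auto intro!: continuous_intros derivative_eq_intros)

lemma chain_subset:
  assumes "Ck_chain k f S D" "T \<subseteq> S"
  shows "Ck_chain k f T D"
  using assms unfolding Ck_chain_def
  by (auto intro: continuous_on_subset) (meson DERIV_subset subsetD)

lemma cont_bound:
  fixes g :: "real \<Rightarrow> real"
  assumes "continuous_on {a..b} g" "a < b" "finite F"
    "\<And>y. y \<in> {a<..<b} - F \<Longrightarrow> \<bar>g y\<bar> \<le> K"
    "x \<in> {a..b}"
  shows "\<bar>g x\<bar> \<le> K"
proof (rule ccontr)
  assume "\<not> \<bar>g x\<bar> \<le> K"
  then have gt: "\<bar>g x\<bar> > K" by simp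
  have "continuous (at x within {a..b}) g" using assms(1,5) continuous_on_eq_continuous_within by blast
  then have "\<forall>\<^sub>F y in at x within {a..b}. \<bar>g y\<bar> > K"
    using gt by (intro order_tendstoD) (auto intro!: tendsto_intros simp: continuous_within)
  then obtain d where d: "d > 0" "\<And>y. y \<in> {a..b} \<Longrightarrow> y \<noteq> x \<Longrightarrow> dist y x < d \<Longrightarrow> \<bar>g y\<bar> > K"
    unfolding eventually_at by blast
  define lo where "lo = (if x < b then x else max a (x - d/2))"
  define hi where "hi = (if x < b then min b (x + d/2) else x)"
  have lohi: "lo < hi" using assms(2,5) d(1) by (auto simp: lo_def hi_def)
  have "infinite ({lo<..<hi} - F)" using lohi assms(3) by (simp add: Diff_infinite_finite)
  then obtain y where y: "y \<in> {lo<..<hi}" "y \<notin> F"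
    by (metis Diff_iff finite.emptyI subsetI finite_subset)
  have yab: "y \<in> {a<..<b}" using y(1) assms(2,5) d(1) by (auto simp: lo_def hi_def split: if_splits)
  have "y \<noteq> x" "dist y x < d" using y(1) assms(5) d(1)
    by (auto simp: lo_def hi_def dist_real_def split: if_splits)
  then have "\<bar>g y\<bar> > K" using d(2)[of y] yab by auto
  moreover have "\<bar>g y\<bar> \<le> K" using assms(4) yab y(2) by auto
  ultimately show False by simp
qed

definition PCdata :: "(real \<Rightarrow> real) \<Rightarrow> real set \<Rightarrow> real \<Rightarrow> real \<Rightarrow> bool" where
 "PCdata \<psi> F B K \<longleftrightarrow> finite F \<and> 0 \<le> K \<and> (\<forall>x\<in>{0..1}. \<bar>\<psi> x\<bar> \<le> B) \<and>
   (\<forall>y\<in>{0<..<1} - F. (\<exists>\<delta>>0. 0 \<le> y - \<delta> \<and> y + \<delta> \<le> 1 \<and> Ck_on 1 \<psi> {y-\<delta>..y+\<delta>}) \<and>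
       (\<forall>d. (\<psi> has_real_derivative d) (at y) \<longrightarrow> \<bar>d\<bar> \<le> K))"

lemma loc_deriv:
  assumes "Ck_chain 1 \<psi> {y-\<delta>..y+\<delta>} D" "\<delta> > 0"
  shows "(\<psi> has_real_derivative D 1 y) (at y)"
proof -
  have "(D 0 has_real_derivative D (Suc 0) y) (at y within {y-\<delta>..y+\<delta>})"
    using assms unfolding Ck_chain_def by auto
  moreover have "D 0 = \<psi>" using assms unfolding Ck_chain_def by auto
  moreover have "at y within {y-\<delta>..y+\<delta>} = at y" using assms(2) by (intro at_within_Icc_at) auto
  ultimately show ?thesis by simp
qed

lemma loc_deriv_ex:
  assumes "Ck_on 1 \<psi> {y-\<delta>..y+\<delta>}" "\<delta> > 0"
  shows "\<exists>d. (\<psi> has_real_derivative d) (at y)"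
  using assms loc_deriv unfolding Ck_on_def by blast

lemma chain_cong:
  assumes "Ck_chain k g S D" "\<And>x. x \<in> S \<Longrightarrow> f x = g x"
  shows "Ck_chain k f S (\<lambda>j. if j = 0 then f else D j)"
proof -
  have D0: "D 0 = g" using assms(1) unfolding Ck_chain_def by auto
  have c: "continuous_on S f"
    using assms(1) D0 unfolding Ck_chain_def
    by (metis assms(2) continuous_on_cong le0)
  have d: "(f has_real_derivative D (Suc 0) x) (at x within S)" if "x \<in> S" "0 < k" for x
  proof -
    have "(g has_real_derivative D (Suc 0) x) (at x within S)"
      using assms(1) D0 that unfolding Ck_chain_def by auto
    then show ?thesis
      by (rule has_field_derivative_transform_within[where d=1]) (use that assms(2) in auto)
  qed
  show ?thesis using assms(1) c d unfolding Ck_chain_def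
    by (auto simp: D0)
qed

lemma sum_bound_finite:
  fixes f :: "'a \<Rightarrow> real"
  assumes "finite P"
  shows "\<exists>B\<ge>0. \<forall>I\<in>P. f I \<le> B"
proof -
  have "\<forall>I\<in>P. f I \<le> (\<Sum>I\<in>P. \<bar>f I\<bar>)"
  proof
    fix I assume "I \<in> P"
    then have "\<bar>f I\<bar> \<le> (\<Sum>I\<in>P. \<bar>f I\<bar>)" using assms by (intro member_le_sum) auto
    then show "f I \<le> (\<Sum>I\<in>P. \<bar>f I\<bar>)" by linarith
  qed
  moreover have "0 \<le> (\<Sum>I\<in>P. \<bar>f I\<bar>)" by (simp add: sum_nonneg)
  ultimately show ?thesis by blast
qed

lemma PCk_to_data:
  assumes "PCk 1 \<psi>"
  shows "\<exists>F B K. PCdata \<psi> F B K"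
proof -
  obtain P where P: "finite P" "\<Union>P = {0..1}" "pairwise disjnt P"
    "\<forall>I\<in>P. is_interval I \<and> (\<exists>g. Ck_on 1 g {0..1} \<and> (\<forall>x\<in>I. \<psi> x = g x))"
    using assms unfolding PCk_def by blast
  have "\<forall>I\<in>P. \<exists>D. Ck_chain 1 (D 0) {0..1} D \<and> (\<forall>x\<in>I. \<psi> x = D 0 x)"
    using P(4) unfolding Ck_on_def Ck_chain_def by metis
  then obtain DG where DG: "\<And>I. I \<in> P \<Longrightarrow> Ck_chain 1 (DG I 0) {0..1} (DG I) \<and> (\<forall>x\<in>I. \<psi> x = DG I 0 x)"
    by metis
  have "\<forall>I\<in>P. \<exists>B. \<forall>x\<in>{0..1}. \<bar>DG I 0 x\<bar> \<le> B \<and> \<bar>DG I 1 x\<bar> \<le> B"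
  proof
    fix I assume I: "I \<in> P"
    obtain B0 where B0: "\<forall>x\<in>{0..1}. \<bar>DG I 0 x\<bar> \<le> B0" using chain_bounded[of 1 "DG I 0" 0 1 "DG I" 0] DG[OF I] by blast
    obtain B1 where B1: "\<forall>x\<in>{0..1}. \<bar>DG I 1 x\<bar> \<le> B1" using chain_bounded[of 1 "DG I 0" 0 1 "DG I" 1] DG[OF I] by blast
    show "\<exists>B. \<forall>x\<in>{0..1}. \<bar>DG I 0 x\<bar> \<le> B \<and> \<bar>DG I 1 x\<bar> \<le> B"
      using B0 B1 by (intro exI[of _ "max B0 B1"]) auto
  qed
  then obtain BI where BI: "\<And>I. I \<in> P \<Longrightarrow> \<forall>x\<in>{0..1}. \<bar>DG I 0 x\<bar> \<le> BI I \<and> \<bar>DG I 1 x\<bar> \<le> BI I"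
    by metis
  obtain B where B: "B \<ge> 0" "\<forall>I\<in>P. BI I \<le> B" using sum_bound_finite[OF P(1)] by blast
  define F where "F = (\<Union>I\<in>P. {Inf I, Sup I})"
  have finF: "finite F" unfolding F_def using P(1) by auto
  have bnd: "\<forall>x\<in>{0..1}. \<bar>\<psi> x\<bar> \<le> B"
  proof
    fix x :: real assume x: "x \<in> {0..1}"
    then obtain I where I: "I \<in> P" "x \<in> I" using P(2) by blast
    then have "\<psi> x = DG I 0 x" using DG by blast
    then show "\<bar>\<psi> x\<bar> \<le> B" using BI[OF I(1)] B I x by force
  qed
  have loc: "(\<exists>\<delta>>0. 0 \<le> y - \<delta> \<and> y + \<delta> \<le> 1 \<and> Ck_on 1 \<psi> {y-\<delta>..y+\<delta>}) \<and>
       (\<forall>d. (\<psi> has_real_derivative d) (at y) \<longrightarrow> \<bar>d\<bar> \<le> B)" if y: "y \<in> {0<..<1} - F" for y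
  proof -
    have "y \<in> \<Union>P" using P(2) y by auto
    then obtain I where I: "I \<in> P" "y \<in> I" by blast
    have sub: "I \<subseteq> {0..1}" using P(2) I(1) by blast
    have bddI: "bdd_below I" "bdd_above I" 
      apply (rule bdd_belowI[where m=0]) using sub apply force
      apply (rule bdd_aboveI[where M=1]) using sub by force
    have "Inf I \<le> y" "y \<le> Sup I" using I(2) bddI by (auto intro: cInf_lower cSup_upper)
    moreover have "y \<noteq> Inf I" "y \<noteq> Sup I" using y I unfolding F_def by auto
    ultimately have lt: "Inf I < y" "y < Sup I" by auto
    obtain a where a: "a \<in> I" "a < y" using cInf_lessD[OF _ lt(1)] I(2) by blast
    obtain b where b: "b \<in> I" "y < b" using less_cSupD[OF _ lt(2)] I(2) by blast
    have ivl: "is_interval I" using P(4) I(1) by blast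
    have abI: "{a..b} \<subseteq> I"
    proof
      fix x assume x: "x \<in> {a..b}"
      show "x \<in> I"
        by (rule is_interval_1[THEN iffD1, OF ivl, rule_format, of a b x]) (use a(1) b(1) x in auto)
    qed
    have a0: "0 \<le> a" and b1: "b \<le> 1" using a(1) b(1) sub by auto
    define \<delta> where "\<delta> = min (y - a) (b - y)"
    have \<delta>: "\<delta> > 0" "a \<le> y - \<delta>" "y + \<delta> \<le> b" using a b by (auto simp: \<delta>_def)
    have sub2: "{y-\<delta>..y+\<delta>} \<subseteq> I" using abI \<delta> by auto
    have ch: "Ck_chain 1 (DG I 0) {y-\<delta>..y+\<delta>} (DG I)"
      using DG[OF I(1)] by (rule conjunct1[THEN chain_subset]) (use \<delta> a0 b1 in auto)
    have "Ck_chain 1 \<psi> {y-\<delta>..y+\<delta>} (\<lambda>j. if j = 0 then \<psi> else DG I j)"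
      by (rule chain_cong[OF ch]) (use DG[OF I(1)] sub2 in auto)
    then have ck: "Ck_on 1 \<psi> {y-\<delta>..y+\<delta>}" unfolding Ck_on_def by blast
    have dg: "(DG I 0 has_real_derivative DG I 1 y) (at y)"
      using loc_deriv[OF ch \<delta>(1)] .
    have dpsi: "(\<psi> has_real_derivative DG I 1 y) (at y)"
      apply (rule has_field_derivative_transform_within_open[OF dg, of "{a<..<b}"])
      using a b DG[OF I(1)] abI by (auto simp: subset_iff)
    have "\<bar>d\<bar> \<le> B" if "(\<psi> has_real_derivative d) (at y)" for d
    proof -
      have "d = DG I 1 y" using DERIV_unique[OF that dpsi] .
      moreover have "y \<in> {0..1}" using y by auto
      ultimately show ?thesis using BI[OF I(1)] B I by force
    qed
    then show ?thesis using \<delta> a0 b1 ck by force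
  qed
  show ?thesis unfolding PCdata_def using finF B(1) bnd loc by blast
qed

definition PCset :: "(real \<Rightarrow> real) \<Rightarrow> real set" where
  "PCset w = {Ck_norm 1 w {a..b} | a b. 0 \<le> a \<and> a \<le> b \<and> b \<le> 1 \<and> Ck_on 1 w {a..b}}"

lemma PCk_norm_eq: "PCk_norm 1 w = Sup (PCset w)"
  by (simp add: PCk_norm_def PCset_def)

lemma Ck_on_point: "Ck_on 1 w {a..a}"
  using Ck_chain_point Ck_on_def by blast

lemma Ck_norm_point: "Ck_norm 1 w {a..a} \<le> \<bar>w a\<bar>"
  using Ck_norm_le_chain[OF Ck_chain_point[of w a]] by simp

lemma PCset_mem: "0 \<le> a \<Longrightarrow> a \<le> b \<Longrightarrow> b \<le> 1 \<Longrightarrow> Ck_on 1 w {a..b} \<Longrightarrow> Ck_norm 1 w {a..b} \<in> PCset w"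
  unfolding PCset_def by blast

lemma PCset_ne: "PCset w \<noteq> {}"
  using PCset_mem[OF _ _ _ Ck_on_point[of w 0]] by auto

lemma Ck_norm_interval_le:
  assumes "finite F" "\<forall>x\<in>{0..1}. \<bar>w x\<bar> \<le> A"
    "\<forall>y\<in>{0<..<1} - F. \<forall>d. (w has_real_derivative d) (at y) \<longrightarrow> \<bar>d\<bar> \<le> A'"
    "0 \<le> A'" "0 \<le> a" "a \<le> b" "b \<le> 1" "Ck_on 1 w {a..b}"
  shows "Ck_norm 1 w {a..b} \<le> A + A'"
proof (cases "a = b")
  case True
  then have "Ck_norm 1 w {a..b} \<le> \<bar>w a\<bar>" using Ck_norm_point by simp
  also have "\<dots> \<le> A" using assms(2,5,6,7) True by auto
  finally show ?thesis using assms(4) by linarith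
next
  case False
  then have ab: "a < b" using assms(6) by simp
  obtain D where D: "Ck_chain 1 w {a..b} D" using assms(8) unfolding Ck_on_def by blast
  have D0: "D 0 = w" using D unfolding Ck_chain_def by auto
  have "Ck_norm 1 w {a..b} \<le> (\<Sum>j\<le>1. (SUP x\<in>{a..b}. \<bar>D j x\<bar>))"
    by (rule Ck_norm_le_chain[OF D assms(6)])
  also have "\<dots> = (SUP x\<in>{a..b}. \<bar>D 0 x\<bar>) + (SUP x\<in>{a..b}. \<bar>D 1 x\<bar>)" by simp
  also have "\<dots> \<le> A + A'"
  proof (rule add_mono)
    show "(SUP x\<in>{a..b}. \<bar>D 0 x\<bar>) \<le> A"
      by (rule chain_sup_le) (use assms(2,5,6,7) D0 in auto)
    show "(SUP x\<in>{a..b}. \<bar>D 1 x\<bar>) \<le> A'"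
    proof (rule chain_sup_le[OF assms(6)])
      fix x assume x: "x \<in> {a..b}"
      show "\<bar>D 1 x\<bar> \<le> A'"
      proof (rule cont_bound[OF _ ab assms(1) _ x])
        show "continuous_on {a..b} (D 1)" using D unfolding Ck_chain_def by auto
      next
        fix y assume y: "y \<in> {a<..<b} - F"
        have "(D 0 has_real_derivative D (Suc 0) y) (at y within {a..b})"
          using D y unfolding Ck_chain_def by auto
        moreover have "at y within {a..b} = at y" using y by (intro at_within_Icc_at) auto
        ultimately have "(w has_real_derivative D 1 y) (at y)" using D0 by simp
        then show "\<bar>D 1 y\<bar> \<le> A'" using assms(3,5,7) y by auto
      qed
    qed
  qed
  finally show ?thesis .
qed

lemma PCk_norm_le:
  assumes "finite F" "\<forall>x\<in>{0..1}. \<bar>w x\<bar> \<le> A"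
    "\<forall>y\<in>{0<..<1} - F. \<forall>d. (w has_real_derivative d) (at y) \<longrightarrow> \<bar>d\<bar> \<le> A'"
    "0 \<le> A'"
  shows "bdd_above (PCset w) \<and> PCk_norm 1 w \<le> A + A'"
proof -
  have all: "\<forall>s\<in>PCset w. s \<le> A + A'"
    unfolding PCset_def using Ck_norm_interval_le[OF assms] by auto
  then have "bdd_above (PCset w)" by (intro bdd_aboveI[where M="A+A'"]) auto
  moreover have "PCk_norm 1 w \<le> A + A'" unfolding PCk_norm_eq
    using all PCset_ne by (intro cSup_least) auto
  ultimately show ?thesis by blast
qed

lemma PCk_norm_ge_val:
  assumes "bdd_above (PCset w)" "x \<in> {0..1}"
  shows "\<bar>w x\<bar> \<le> PCk_norm 1 w"
proof -
  have "\<bar>w x\<bar> \<le> Ck_norm 1 w {x..x}"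
    by (rule Ck_norm_ge[OF Ck_on_point, where j=0]) (auto simp: Ck_chain_def)
  also have "\<dots> \<le> Sup (PCset w)"
    by (rule cSup_upper[OF PCset_mem[OF _ _ _ Ck_on_point] assms(1)]) (use assms in auto)
  finally show ?thesis unfolding PCk_norm_eq .
qed

lemma PCk_norm_ge_deriv:
  assumes "bdd_above (PCset w)" "\<delta> > 0" "0 \<le> y - \<delta>" "y + \<delta> \<le> 1" "Ck_on 1 w {y-\<delta>..y+\<delta>}"
    "(w has_real_derivative d) (at y)"
  shows "\<bar>d\<bar> \<le> PCk_norm 1 w"
proof -
  have "\<bar>d\<bar> \<le> Ck_norm 1 w {y-\<delta>..y+\<delta>}"
  proof (rule Ck_norm_ge[OF assms(5), where j=1 and x=y])
    fix D assume "Ck_chain 1 w {y - \<delta>..y + \<delta>} D"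
    from loc_deriv[OF this assms(2)] show "D 1 y = d" using DERIV_unique assms(6) by blast
  qed (use assms in auto)
  also have "\<dots> \<le> Sup (PCset w)"
    by (rule cSup_upper[OF PCset_mem[OF _ _ _ assms(5)] assms(1)]) (use assms in auto)
  finally show ?thesis unfolding PCk_norm_eq .
qed

lemma PCdata_bdd:
  assumes "PCdata w F B K"
  shows "bdd_above (PCset w) \<and> PCk_norm 1 w \<le> B + K"
  using assms unfolding PCdata_def by (intro PCk_norm_le[where F=F]) auto

lemma PCdata_val:
  assumes "PCdata w F B K" "x \<in> {0..1}"
  shows "\<bar>w x\<bar> \<le> PCk_norm 1 w"
  using PCk_norm_ge_val[OF conjunct1[OF PCdata_bdd[OF assms(1)]] assms(2)] .

lemma PCdata_nonneg:
  assumes "PCdata w F B K"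
  shows "0 \<le> PCk_norm 1 w"
  using PCdata_val[OF assms, of 0] by auto

lemma PCdata_deriv:
  assumes "PCdata w F B K" "y \<in> {0<..<1} - F" "(w has_real_derivative d) (at y)"
  shows "\<bar>d\<bar> \<le> PCk_norm 1 w"
proof -
  obtain \<delta> where "\<delta> > 0" "0 \<le> y - \<delta>" "y + \<delta> \<le> 1" "Ck_on 1 w {y-\<delta>..y+\<delta>}"
    using assms(1,2) unfolding PCdata_def by blast
  then show ?thesis using PCk_norm_ge_deriv[OF conjunct1[OF PCdata_bdd[OF assms(1)]] _ _ _ _ assms(3)] by blast
qed

lemma PCdata_diff:
  assumes u: "PCdata u Fu Bu Ku" and w: "PCdata w Fw Bw Kw"
  shows "PCdata (\<lambda>x. w x - u x) (Fu \<union> Fw) (Bw + Bu) (Kw + Ku)"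
  unfolding PCdata_def
proof (intro conjI ballI)
  show "finite (Fu \<union> Fw)" "0 \<le> Kw + Ku" using u w unfolding PCdata_def by auto
next
  fix x :: real assume "x \<in> {0..1}"
  then have "\<bar>w x\<bar> \<le> Bw" "\<bar>u x\<bar> \<le> Bu" using u w unfolding PCdata_def by auto
  then show "\<bar>w x - u x\<bar> \<le> Bw + Bu" by linarith
next
  fix y assume y: "y \<in> {0<..<1} - (Fu \<union> Fw)"
  obtain \<delta>1 where d1: "\<delta>1 > 0" "0 \<le> y - \<delta>1" "y + \<delta>1 \<le> 1" "Ck_on 1 u {y-\<delta>1..y+\<delta>1}"
    and ku: "\<forall>d. (u has_real_derivative d) (at y) \<longrightarrow> \<bar>d\<bar> \<le> Ku"
    using u y unfolding PCdata_def by blast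
  obtain \<delta>2 where d2: "\<delta>2 > 0" "0 \<le> y - \<delta>2" "y + \<delta>2 \<le> 1" "Ck_on 1 w {y-\<delta>2..y+\<delta>2}"
    and kw: "\<forall>d. (w has_real_derivative d) (at y) \<longrightarrow> \<bar>d\<bar> \<le> Kw"
    using w y unfolding PCdata_def by blast
  define \<delta> where "\<delta> = min \<delta>1 \<delta>2"
  obtain Du where Du: "Ck_chain 1 u {y-\<delta>1..y+\<delta>1} Du" using d1(4) Ck_on_def by blast
  obtain Dw where Dw: "Ck_chain 1 w {y-\<delta>2..y+\<delta>2} Dw" using d2(4) Ck_on_def by blast
  have Du': "Ck_chain 1 u {y-\<delta>..y+\<delta>} Du" by (rule chain_subset[OF Du]) (auto simp: \<delta>_def)
  have Dw': "Ck_chain 1 w {y-\<delta>..y+\<delta>} Dw" by (rule chain_subset[OF Dw]) (auto simp: \<delta>_def)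
  have "Ck_chain 1 (\<lambda>x. w x + (-1) * u x) {y-\<delta>..y+\<delta>} (\<lambda>j x. Dw j x + (-1) * Du j x)"
    by (rule chain_lin[OF Dw' Du'])
  then have "Ck_on 1 (\<lambda>x. w x - u x) {y-\<delta>..y+\<delta>}" unfolding Ck_on_def by auto
  moreover have "\<delta> > 0" "0 \<le> y - \<delta>" "y + \<delta> \<le> 1" using d1 d2 by (auto simp: \<delta>_def)
  ultimately show "\<exists>\<delta>>0. 0 \<le> y - \<delta> \<and> y + \<delta> \<le> 1 \<and> Ck_on 1 (\<lambda>x. w x - u x) {y - \<delta>..y + \<delta>}"
    by blast
  show "\<forall>d. ((\<lambda>x. w x - u x) has_real_derivative d) (at y) \<longrightarrow> \<bar>d\<bar> \<le> Kw + Ku"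
  proof (intro allI impI)
    fix d assume d: "((\<lambda>x. w x - u x) has_real_derivative d) (at y)"
    obtain du where du: "(u has_real_derivative du) (at y)" using loc_deriv_ex[OF d1(4) d1(1)] by blast
    obtain dw where dw: "(w has_real_derivative dw) (at y)" using loc_deriv_ex[OF d2(4) d2(1)] by blast
    have "((\<lambda>x. w x - u x) has_real_derivative dw - du) (at y)" using dw du by (rule DERIV_diff)
    then have "d = dw - du" using DERIV_unique d by blast
    then show "\<bar>d\<bar> \<le> Kw + Ku" using ku kw du dw by force
  qed
qed

lemma PCk_quasi_tri:
  assumes u: "PCdata u Fu Bu Ku" and w: "PCdata w Fw Bw Kw"
  shows "PCk_norm 1 w \<le> 2 * (PCk_norm 1 u + PCk_norm 1 (\<lambda>x. w x - u x))"
proof -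
  let ?v = "\<lambda>x. w x - u x"
  have v: "PCdata ?v (Fu \<union> Fw) (Bw + Bu) (Kw + Ku)" by (rule PCdata_diff[OF u w])
  let ?A = "PCk_norm 1 u + PCk_norm 1 ?v"
  have "bdd_above (PCset w) \<and> PCk_norm 1 w \<le> ?A + ?A"
  proof (rule PCk_norm_le[where F="Fu \<union> Fw"])
    show "finite (Fu \<union> Fw)" using u w unfolding PCdata_def by auto
    show "0 \<le> ?A" using PCdata_nonneg[OF u] PCdata_nonneg[OF v] by linarith
    show "\<forall>x\<in>{0..1}. \<bar>w x\<bar> \<le> ?A"
    proof
      fix x :: real assume x: "x \<in> {0..1}"
      have "\<bar>u x\<bar> \<le> PCk_norm 1 u" "\<bar>?v x\<bar> \<le> PCk_norm 1 ?v"
        using PCdata_val[OF u x] PCdata_val[OF v x] by auto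
      then show "\<bar>w x\<bar> \<le> ?A" by linarith
    qed
    show "\<forall>y\<in>{0<..<1} - (Fu \<union> Fw). \<forall>d. (w has_real_derivative d) (at y) \<longrightarrow> \<bar>d\<bar> \<le> ?A"
    proof (intro ballI allI impI)
      fix y d assume y: "y \<in> {0<..<1} - (Fu \<union> Fw)" and d: "(w has_real_derivative d) (at y)"
      obtain \<delta>1 where d1: "\<delta>1 > 0" "Ck_on 1 u {y-\<delta>1..y+\<delta>1}"
        using u y unfolding PCdata_def by blast
      obtain du where du: "(u has_real_derivative du) (at y)" using loc_deriv_ex[OF d1(2) d1(1)] by blast
      have dv: "(?v has_real_derivative d - du) (at y)" using d du by (rule DERIV_diff)
      have "\<bar>du\<bar> \<le> PCk_norm 1 u" by (rule PCdata_deriv[OF u _ du]) (use y in auto)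
      moreover have "\<bar>d - du\<bar> \<le> PCk_norm 1 ?v" by (rule PCdata_deriv[OF v y dv])
      ultimately show "\<bar>d\<bar> \<le> ?A" by linarith
    qed
  qed
  then have "PCk_norm 1 w \<le> ?A + ?A" by blast
  then show ?thesis unfolding mult_2 .
qed

lemma chain_fun_eq: "Ck_chain k f S D \<Longrightarrow> f = g \<Longrightarrow> Ck_chain k g S D" by simp

lemma Ck_norm_tri:
  assumes f: "Ck_on 1 f {a..b}" and g: "Ck_on 1 g {a..b}" and ab: "a \<le> b"
  shows "Ck_norm 1 (\<lambda>x. f x + g x) {a..b} \<le> Ck_norm 1 f {a..b} + Ck_norm 1 g {a..b}"
proof -
  let ?S = "\<lambda>h. {\<Sum>j\<le>1. SUP x\<in>{a..b}. \<bar>D j x\<bar> |D. Ck_chain 1 h {a..b} D}"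
  have key: "Ck_norm 1 (\<lambda>x. f x + g x) {a..b} \<le> s + t" if s: "s \<in> ?S f" and t: "t \<in> ?S g" for s t
  proof -
    obtain D where D: "Ck_chain 1 f {a..b} D" "s = (\<Sum>j\<le>1. SUP x\<in>{a..b}. \<bar>D j x\<bar>)" using s by blast
    obtain E where E: "Ck_chain 1 g {a..b} E" "t = (\<Sum>j\<le>1. SUP x\<in>{a..b}. \<bar>E j x\<bar>)" using t by blast
    have ch: "Ck_chain 1 (\<lambda>x. f x + g x) {a..b} (\<lambda>j x. D j x + 1 * E j x)"
      using chain_lin[OF D(1) E(1), of 1] by simp
    have "Ck_norm 1 (\<lambda>x. f x + g x) {a..b} \<le> (\<Sum>j\<le>1. SUP x\<in>{a..b}. \<bar>D j x + 1 * E j x\<bar>)"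
      using Ck_norm_le_chain[OF ch ab] by simp
    also have "\<dots> \<le> (\<Sum>j\<le>1. (SUP x\<in>{a..b}. \<bar>D j x\<bar>) + (SUP x\<in>{a..b}. \<bar>E j x\<bar>))"
    proof (rule sum_mono)
      fix j assume j: "j \<in> {..1::nat}"
      show "(SUP x\<in>{a..b}. \<bar>D j x + 1 * E j x\<bar>) \<le> (SUP x\<in>{a..b}. \<bar>D j x\<bar>) + (SUP x\<in>{a..b}. \<bar>E j x\<bar>)"
      proof (rule cSUP_least)
        show "{a..b} \<noteq> {}" using ab by simp
      next
        fix x assume x: "x \<in> {a..b}"
        have "\<bar>D j x + 1 * E j x\<bar> \<le> \<bar>D j x\<bar> + \<bar>E j x\<bar>" by simp
        also have "\<dots> \<le> (SUP x\<in>{a..b}. \<bar>D j x\<bar>) + (SUP x\<in>{a..b}. \<bar>E j x\<bar>)"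
          using chain_sup_ge[OF D(1), of j x] chain_sup_ge[OF E(1), of j x] j x by auto
        finally show "\<bar>D j x + 1 * E j x\<bar> \<le> (SUP x\<in>{a..b}. \<bar>D j x\<bar>) + (SUP x\<in>{a..b}. \<bar>E j x\<bar>)" .
      qed
    qed
    also have "\<dots> = s + t" using D(2) E(2) by (simp add: sum.distrib)
    finally show ?thesis .
  qed
  have neS: "?S f \<noteq> {}" "?S g \<noteq> {}" using f g unfolding Ck_on_def by auto
  have "Ck_norm 1 (\<lambda>x. f x + g x) {a..b} - t \<le> Ck_norm 1 f {a..b}" if t: "t \<in> ?S g" for t
    unfolding Ck_norm_def[of 1 f] by (rule cInf_greatest[OF neS(1)]) (use key t in force)
  then have "Ck_norm 1 (\<lambda>x. f x + g x) {a..b} - Ck_norm 1 f {a..b} \<le> Ck_norm 1 g {a..b}"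
    unfolding Ck_norm_def[of 1 g] by (intro cInf_greatest[OF neS(2)]) force
  then show ?thesis by linarith
qed

definition Good :: "(real \<Rightarrow> real \<Rightarrow> real) \<Rightarrow> real \<Rightarrow> real \<Rightarrow> bool" where
  "Good \<phi> y K \<longleftrightarrow> (\<exists>D. Ck_chain 1 (\<phi> y) {0..1} D \<and> (\<forall>s\<in>{0..1}. \<bar>D 0 s\<bar> \<le> K \<and> \<bar>D 1 s\<bar> \<le> K))"

lemma Good_mono: "Good \<phi> y K \<Longrightarrow> K \<le> K' \<Longrightarrow> Good \<phi> y K'"
  unfolding Good_def by force

lemma chain_bound2:
  assumes "Ck_chain 1 f {0..1} D"
  shows "\<exists>K. \<forall>s\<in>{0..1}. \<bar>D 0 s\<bar> \<le> K \<and> \<bar>D 1 s\<bar> \<le> K"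
proof -
  obtain B0 where B0: "\<forall>x\<in>{0..1}. \<bar>D 0 x\<bar> \<le> B0" using chain_bounded[OF assms, of 0] by auto
  obtain B1 where B1: "\<forall>x\<in>{0..1}. \<bar>D 1 x\<bar> \<le> B1" using chain_bounded[OF assms, of 1] by auto
  show ?thesis using B0 B1 by (intro exI[of _ "max B0 B1"]) auto
qed

lemma kernel_local:
  assumes k: "kernel_C1C1 \<phi>" and x: "x \<in> {0..1}"
  shows "\<exists>\<delta>>0. \<exists>K. \<forall>y\<in>{0..1}. \<bar>y - x\<bar> < \<delta> \<longrightarrow> Good \<phi> y K"
proof -
  obtain \<Phi>' where ck: "\<forall>x\<in>{0..1}. Ck_on 1 (\<phi> x) {0..1} \<and> Ck_on 1 (\<Phi>' x) {0..1}"
    and lim: "\<forall>x\<in>{0..1}. ((\<lambda>y. Ck_norm 1 (\<lambda>s. \<phi> y s - \<phi> x s - (y - x) * \<Phi>' x s) {0..1} / \<bar>y - x\<bar>)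
                     \<longlongrightarrow> 0) (at x within {0..1})"
    using k unfolding kernel_C1C1_def by blast
  obtain Dx where Dx: "Ck_chain 1 (\<phi> x) {0..1} Dx" using ck x Ck_on_def by blast
  obtain EP where EP: "Ck_chain 1 (\<Phi>' x) {0..1} EP" using ck x Ck_on_def by blast
  obtain Kx where Kx: "\<forall>s\<in>{0..1}. \<bar>Dx 0 s\<bar> \<le> Kx \<and> \<bar>Dx 1 s\<bar> \<le> Kx" using chain_bound2[OF Dx] by blast
  obtain KP where KP: "\<forall>s\<in>{0..1}. \<bar>EP 0 s\<bar> \<le> KP \<and> \<bar>EP 1 s\<bar> \<le> KP" using chain_bound2[OF EP] by blast
  have "\<forall>\<^sub>F y in at x within {0..1}. Ck_norm 1 (\<lambda>s. \<phi> y s - \<phi> x s - (y - x) * \<Phi>' x s) {0..1} / \<bar>y - x\<bar> < 1"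
    by (rule order_tendstoD(2)[OF lim[rule_format, OF x]]) simp
  then obtain d where d: "d > 0" "\<And>y. y \<in> {0..1} \<Longrightarrow> y \<noteq> x \<Longrightarrow> dist y x < d \<Longrightarrow>
      Ck_norm 1 (\<lambda>s. \<phi> y s - \<phi> x s - (y - x) * \<Phi>' x s) {0..1} / \<bar>y - x\<bar> < 1"
    unfolding eventually_at by blast
  define K where "K = 1 + \<bar>Kx\<bar> + \<bar>KP\<bar>"
  have "Good \<phi> y K" if y: "y \<in> {0..1}" "\<bar>y - x\<bar> < min d 1" for y
  proof (cases "y = x")
    case True
    then show ?thesis unfolding Good_def K_def using Dx Kx by fastforce
  next
    case False
    let ?g = "\<lambda>s. \<phi> y s - \<phi> x s - (y - x) * \<Phi>' x s"
    have "Ck_norm 1 ?g {0..1} / \<bar>y - x\<bar> < 1" using d(2)[OF y(1) False] y(2) by (simp add: dist_real_def)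
    then have lt1: "Ck_norm 1 ?g {0..1} < 1" using False y(2)
      by (simp add: divide_less_eq split: if_splits)
    obtain Dy where Dy: "Ck_chain 1 (\<phi> y) {0..1} Dy" using ck y(1) Ck_on_def by blast
    have "Ck_chain 1 (\<lambda>s. (\<phi> y s + (-1) * \<phi> x s) + (-(y-x)) * \<Phi>' x s) {0..1}
             (\<lambda>j s. (Dy j s + (-1) * Dx j s) + (-(y-x)) * EP j s)"
      by (rule chain_lin[OF chain_lin[OF Dy Dx] EP])
    then have "Ck_chain 1 ?g {0..1} (\<lambda>j s. (Dy j s + (-1) * Dx j s) + (-(y-x)) * EP j s)"
      by (rule chain_fun_eq) (auto simp: algebra_simps)
    then have ne: "{\<Sum>j\<le>1. SUP s\<in>{0..1}. \<bar>D j s\<bar> |D. Ck_chain 1 ?g {0..1} D} \<noteq> {}" by blast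
    obtain E where E: "Ck_chain 1 ?g {0..1} E" "(\<Sum>j\<le>1. SUP s\<in>{0..1::real}. \<bar>E j s\<bar>) < 1"
      using cInf_lessD[OF ne lt1[unfolded Ck_norm_def]] by blast
    have E1: "\<bar>E j s\<bar> \<le> 1" if "j \<le> 1" "s \<in> {0..1}" for j s
    proof -
      have "\<bar>E j s\<bar> \<le> (SUP s\<in>{0..1}. \<bar>E j s\<bar>)" by (rule chain_sup_ge[OF E(1) that(1,2)])
      also have "\<dots> \<le> (\<Sum>j\<le>1. SUP s\<in>{0..1::real}. \<bar>E j s\<bar>)"
        by (rule member_le_sum) (use that E(1) chain_sup_nonneg in auto)
      finally show ?thesis using E(2) by linarith
    qed
    have "Ck_chain 1 (\<lambda>s. ?g s + 1 * (\<phi> x s + (y - x) * \<Phi>' x s)) {0..1}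
            (\<lambda>j s. E j s + 1 * (Dx j s + (y - x) * EP j s))"
      by (rule chain_lin[OF E(1) chain_lin[OF Dx EP]])
    then have ch: "Ck_chain 1 (\<phi> y) {0..1} (\<lambda>j s. E j s + 1 * (Dx j s + (y - x) * EP j s))"
      by (rule chain_fun_eq) auto
    have yx1: "\<bar>y - x\<bar> \<le> 1" using y(2) by simp
    have bnd: "\<bar>E j s + 1 * (Dx j s + (y - x) * EP j s)\<bar> \<le> K" if "j \<le> 1" "s \<in> {0..1}" for j s
    proof -
      have j01: "j = 0 \<or> j = 1" using that(1) by auto
      have a1: "\<bar>Dx j s\<bar> \<le> Kx" using Kx that(2) j01 by blast
      have a2: "\<bar>EP j s\<bar> \<le> KP" using KP that(2) j01 by blast
      have a3: "\<bar>EP j s\<bar> \<le> \<bar>KP\<bar>" using a2 by linarith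
      have "\<bar>(y - x) * EP j s\<bar> \<le> 1 * \<bar>KP\<bar>" unfolding abs_mult
        by (rule mult_mono) (use yx1 a3 in auto)
      moreover have "\<bar>E j s + 1 * (Dx j s + (y - x) * EP j s)\<bar> \<le> \<bar>E j s\<bar> + \<bar>Dx j s\<bar> + \<bar>(y - x) * EP j s\<bar>"
        by (simp add: abs_triangle_ineq order_trans[OF abs_triangle_ineq])
      ultimately show ?thesis using E1[OF that] a1 unfolding K_def by linarith
    qed
    show ?thesis unfolding Good_def
      apply (rule exI[of _ "\<lambda>j s. E j s + 1 * (Dx j s + (y - x) * EP j s)"])
      using ch bnd[of 0] bnd[of 1] by simp
  qed
  moreover have "min d 1 > 0" using d(1) by simp
  ultimately show ?thesis by blast
qed

lemma kernel_bound:
  assumes k: "kernel_C1C1 \<phi>"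
  shows "\<exists>K\<ge>0. \<forall>x\<in>{0..1}. (\<forall>s\<in>{0..1}. \<bar>\<phi> x s\<bar> \<le> K) \<and>
     (\<forall>s\<in>{0..1}. \<forall>s'\<in>{0..1}. \<bar>\<phi> x s - \<phi> x s'\<bar> \<le> K * \<bar>s - s'\<bar>) \<and> continuous_on {0..1} (\<phi> x)"
proof -
  have "\<forall>x\<in>{0..1}. \<exists>\<delta>K. fst \<delta>K > 0 \<and> (\<forall>y\<in>{0..1}. \<bar>y - x\<bar> < fst \<delta>K \<longrightarrow> Good \<phi> y (snd \<delta>K))"
    using kernel_local[OF k] by fastforce
  then obtain dk where dk: "\<And>x. x \<in> {0..1} \<Longrightarrow> fst (dk x) > 0 \<and> (\<forall>y\<in>{0..1}. \<bar>y - x\<bar> < fst (dk x) \<longrightarrow> Good \<phi> y (snd (dk x)))"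
    by metis
  have "{0..1::real} \<subseteq> (\<Union>x\<in>{0..1}. ball x (fst (dk x)))" using dk by force
  then obtain C where C: "C \<subseteq> {0..1}" "finite C" "{0..1::real} \<subseteq> (\<Union>x\<in>C. ball x (fst (dk x)))"
    using compactE_image[of "{0..1::real}" "{0..1}" "\<lambda>x. ball x (fst (dk x))"] by auto
  obtain K where K: "K \<ge> 0" "\<forall>x\<in>C. snd (dk x) \<le> K" using sum_bound_finite[OF C(2), of "\<lambda>x. snd (dk x)"] by blast
  have G: "Good \<phi> y K" if y: "y \<in> {0..1}" for y
  proof -
    obtain x where x: "x \<in> C" "y \<in> ball x (fst (dk x))" using C(3) y by blast
    have "\<bar>y - x\<bar> < fst (dk x)" using x(2) by (simp add: dist_real_def abs_minus_commute)
    then have "Good \<phi> y (snd (dk x))" using dk[of x] x(1) C(1) y by blast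
    then show ?thesis using Good_mono K x(1) by blast
  qed
  have "(\<forall>s\<in>{0..1}. \<bar>\<phi> y s\<bar> \<le> K) \<and>
     (\<forall>s\<in>{0..1}. \<forall>s'\<in>{0..1}. \<bar>\<phi> y s - \<phi> y s'\<bar> \<le> K * \<bar>s - s'\<bar>) \<and> continuous_on {0..1} (\<phi> y)"
    if y: "y \<in> {0..1}" for y
  proof -
    obtain D where D: "Ck_chain 1 (\<phi> y) {0..1} D" "\<forall>s\<in>{0..1}. \<bar>D 0 s\<bar> \<le> K \<and> \<bar>D 1 s\<bar> \<le> K"
      using G[OF y] unfolding Good_def by blast
    have D0: "D 0 = \<phi> y" using D(1) unfolding Ck_chain_def by auto
    have der: "(\<phi> y has_real_derivative D 1 s) (at s within {0..1})" if "s \<in> {0..1}" for s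
      using D(1) that D0 unfolding Ck_chain_def by auto
    have lip: "\<bar>\<phi> y s - \<phi> y s'\<bar> \<le> K * \<bar>s - s'\<bar>" if "s \<in> {0..1}" "s' \<in> {0..1}" for s s'
    proof -
      have "norm (\<phi> y s - \<phi> y s') \<le> K * norm (s - s')"
        apply (rule field_differentiable_bound[of "{0..1::real}" "\<phi> y" "D 1" K])
        using der D(2) that by auto
      then show ?thesis by simp
    qed
    have "continuous_on {0..1} (\<phi> y)" using D(1) D0 unfolding Ck_chain_def by auto
    then show ?thesis using D(2) D0 lip by auto
  qed
  then show ?thesis using K(1) by blast
qed

lemma int_bound_real:
  fixes f :: "real \<Rightarrow> real"
  assumes "(f has_integral i) {a..b}" "a \<le> b" "0 \<le> B" "\<And>x. x \<in> {a..b} \<Longrightarrow> \<bar>f x\<bar> \<le> B"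
  shows "\<bar>i\<bar> \<le> B * (b - a)"
  using has_integral_bound[of B f i a b] assms by (simp add: content_real)

lemma seg_bound:
  fixes f f' :: "real \<Rightarrow> real"
  assumes "\<forall>u\<in>{min x y..max x y}. (f has_real_derivative f' u) (at u within {min x y..max x y})"
    "\<forall>u\<in>{min x y..max x y}. \<bar>f' u\<bar> \<le> B"
  shows "\<bar>f y - f x\<bar> \<le> B * \<bar>y - x\<bar>"
proof -
  have "norm (f y - f x) \<le> B * norm (y - x)"
    apply (rule field_differentiable_bound[of "{min x y..max x y}" f f' B])
    using assms by auto
  then show ?thesis by simp
qed

lemma PC21_facts:
  assumes "PC21 \<psi> \<psi>x \<psi>xx"
  defines "M \<equiv> PC21_norm \<psi> \<psi>xx"
  shows "0 \<le> Ck_norm 1 \<psi> {0..1}" "0 \<le> PCk_norm 1 \<psi>xx" "0 \<le> M"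
   "\<forall>x\<in>{0..1}. \<bar>\<psi> x\<bar> \<le> M" "\<forall>x\<in>{0..1}. \<bar>\<psi>x x\<bar> \<le> M" "\<forall>x\<in>{0..1}. \<bar>\<psi>xx x\<bar> \<le> M"
   "\<forall>y\<in>{0..1}. \<forall>z\<in>{0..1}. \<bar>\<psi>x y - \<psi>x z\<bar> \<le> M * \<bar>y - z\<bar>"
proof -
  have ck: "Ck_on 1 \<psi> {0..1}" and der: "\<forall>x\<in>{0..1}. (\<psi> has_real_derivative \<psi>x x) (at x within {0..1})"
    and int: "\<forall>x\<in>{0..1}. (\<psi>xx has_integral (\<psi>x x - \<psi>x 0)) {0..x}" and pc: "PCk 1 \<psi>xx"
    using assms(1) unfolding PC21_def by auto
  obtain F B K where dat: "PCdata \<psi>xx F B K" using PCk_to_data[OF pc] by blast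
  show c0: "0 \<le> Ck_norm 1 \<psi> {0..1}" using Ck_norm_nonneg[OF ck] by simp
  show p0: "0 \<le> PCk_norm 1 \<psi>xx" using PCdata_nonneg[OF dat] .
  show "0 \<le> M" using c0 p0 unfolding M_def PC21_norm_def by simp
  show "\<forall>x\<in>{0..1}. \<bar>\<psi> x\<bar> \<le> M"
  proof
    fix x :: real assume x: "x \<in> {0..1}"
    have "\<bar>\<psi> x\<bar> \<le> Ck_norm 1 \<psi> {0..1}"
      by (rule Ck_norm_ge[OF ck, where j=0]) (use x in \<open>auto simp: Ck_chain_def\<close>)
    then show "\<bar>\<psi> x\<bar> \<le> M" using p0 unfolding M_def PC21_norm_def by simp
  qed
  show "\<forall>x\<in>{0..1}. \<bar>\<psi>x x\<bar> \<le> M"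
  proof
    fix x :: real assume x: "x \<in> {0..1}"
    have "\<bar>\<psi>x x\<bar> \<le> Ck_norm 1 \<psi> {0..1}"
    proof (rule Ck_norm_ge[OF ck, where j=1 and x=x])
      fix D assume D: "Ck_chain 1 \<psi> {0..1} D"
      have "(D 0 has_real_derivative D (Suc 0) x) (at x within {0..1})" using D x unfolding Ck_chain_def by auto
      moreover have "D 0 = \<psi>" using D unfolding Ck_chain_def by auto
      ultimately show "D 1 x = \<psi>x x" using deriv_unique_Icc[of 0 1 x \<psi>] der x by auto
    qed (use x in auto)
    then show "\<bar>\<psi>x x\<bar> \<le> M" using p0 unfolding M_def PC21_norm_def by simp
  qed
  show "\<forall>x\<in>{0..1}. \<bar>\<psi>xx x\<bar> \<le> M"
    using PCdata_val[OF dat] c0 unfolding M_def PC21_norm_def by force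
  then have bxx: "\<forall>x\<in>{0..1}. \<bar>\<psi>xx x\<bar> \<le> M" .
  have M0: "0 \<le> M" using c0 p0 unfolding M_def PC21_norm_def by simp
  have lip: "\<bar>\<psi>x y - \<psi>x z\<bar> \<le> M * \<bar>y - z\<bar>" if yz: "y \<in> {0..1}" "z \<in> {0..1}" "z \<le> y" for y z
  proof -
    have i1: "\<psi>xx integrable_on {0..1}" using int by auto
    have iy: "\<psi>xx integrable_on {0..y}" by (rule integrable_subinterval_real[OF i1]) (use yz in auto)
    have "integral {0..z} \<psi>xx + integral {z..y} \<psi>xx = integral {0..y} \<psi>xx"
      by (rule Henstock_Kurzweil_Integration.integral_combine[OF _ _ iy]) (use yz in auto)
    moreover have "integral {0..z} \<psi>xx = \<psi>x z - \<psi>x 0" using int yz by (simp add: integral_unique)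
    moreover have "integral {0..y} \<psi>xx = \<psi>x y - \<psi>x 0" using int yz by (simp add: integral_unique)
    ultimately have eq: "integral {z..y} \<psi>xx = \<psi>x y - \<psi>x z" by simp
    have "\<psi>xx integrable_on {z..y}" by (rule integrable_subinterval_real[OF i1]) (use yz in auto)
    then have "(\<psi>xx has_integral (\<psi>x y - \<psi>x z)) {z..y}" using eq by (metis integrable_integral)
    then have "\<bar>\<psi>x y - \<psi>x z\<bar> \<le> M * (y - z)"
      by (rule int_bound_real) (use yz M0 bxx in auto)
    then show ?thesis using yz by simp
  qed
  show "\<forall>y\<in>{0..1}. \<forall>z\<in>{0..1}. \<bar>\<psi>x y - \<psi>x z\<bar> \<le> M * \<bar>y - z\<bar>"
  proof (intro ballI)
    fix y z :: real assume "y \<in> {0..1}" "z \<in> {0..1}"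
    then show "\<bar>\<psi>x y - \<psi>x z\<bar> \<le> M * \<bar>y - z\<bar>"
      using lip[of y z] lip[of z y] by (cases "z \<le> y") (auto simp: abs_minus_commute)
  qed
qed

lemma tay1:
  fixes \<psi> \<psi>x :: "real \<Rightarrow> real"
  assumes der: "\<forall>u\<in>{0..1}. (\<psi> has_real_derivative \<psi>x u) (at u within {0..1})"
    and lip: "\<forall>y\<in>{0..1}. \<forall>z\<in>{0..1}. \<bar>\<psi>x y - \<psi>x z\<bar> \<le> M * \<bar>y - z\<bar>"
    and M0: "0 \<le> M" and x: "x \<in> {0..1}" and xs: "x + s \<in> {0..1}"
  shows "\<bar>\<psi> (x + s) - \<psi> x - s * \<psi>x x\<bar> \<le> M * s\<^sup>2"
proof -
  let ?S = "{min x (x+s)..max x (x+s)}"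
  have sub: "?S \<subseteq> {0..1}" using x xs by auto
  have "\<bar>(\<lambda>u. \<psi> u - u * \<psi>x x) (x + s) - (\<lambda>u. \<psi> u - u * \<psi>x x) x\<bar> \<le> (M * \<bar>s\<bar>) * \<bar>(x + s) - x\<bar>"
  proof (rule seg_bound)
    show "\<forall>u\<in>?S. ((\<lambda>u. \<psi> u - u * \<psi>x x) has_real_derivative \<psi>x u - \<psi>x x) (at u within ?S)"
    proof
      fix u assume u: "u \<in> ?S"
      have "(\<psi> has_real_derivative \<psi>x u) (at u within ?S)"
        using der u sub by (meson DERIV_subset subsetD)
      then show "((\<lambda>u. \<psi> u - u * \<psi>x x) has_real_derivative \<psi>x u - \<psi>x x) (at u within ?S)"
        by (auto intro!: derivative_eq_intros)
    qed
    show "\<forall>u\<in>?S. \<bar>\<psi>x u - \<psi>x x\<bar> \<le> M * \<bar>s\<bar>"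
    proof
      fix u assume u: "u \<in> ?S"
      have "\<bar>\<psi>x u - \<psi>x x\<bar> \<le> M * \<bar>u - x\<bar>" using lip u sub x by blast
      also have "\<dots> \<le> M * \<bar>s\<bar>" using u M0 by (intro mult_left_mono) auto
      finally show "\<bar>\<psi>x u - \<psi>x x\<bar> \<le> M * \<bar>s\<bar>" .
    qed
  qed
  then show ?thesis by (simp add: power2_eq_square algebra_simps abs_mult)
qed

lemma ftc_deriv:
  assumes "PC21 \<psi> \<psi>x \<psi>xx" "y \<in> {0..1}" "continuous (at y within {0..1}) \<psi>xx"
  shows "(\<psi>x has_real_derivative \<psi>xx y) (at y within {0..1})"
proof -
  have int: "\<forall>x\<in>{0..1}. (\<psi>xx has_integral (\<psi>x x - \<psi>x 0)) {0..x}"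
    using assms(1) unfolding PC21_def by auto
  have i1: "\<psi>xx integrable_on {0..1}" using int by auto
  have "((\<lambda>u. integral {0..u} \<psi>xx) has_vector_derivative \<psi>xx y) (at y within ({0..1} - {}))"
    by (rule integral_has_vector_derivative_continuous_at[OF i1]) (use assms in auto)
  then have "((\<lambda>u. integral {0..u} \<psi>xx) has_real_derivative \<psi>xx y) (at y within {0..1})"
    by (simp add: has_real_derivative_iff_has_vector_derivative)
  then have "((\<lambda>u. integral {0..u} \<psi>xx + \<psi>x 0) has_real_derivative \<psi>xx y + 0) (at y within {0..1})"
    by (rule DERIV_add) simp
  then have d: "((\<lambda>u. integral {0..u} \<psi>xx + \<psi>x 0) has_real_derivative \<psi>xx y) (at y within {0..1})"
    by simp
  have eq: "integral {0..u} \<psi>xx + \<psi>x 0 = \<psi>x u" if "u \<in> {0..1}" for u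
  proof -
    have "integral {0..u} \<psi>xx = \<psi>x u - \<psi>x 0" using int that by (intro integral_unique) blast
    then show ?thesis by simp
  qed
  show ?thesis
    by (rule has_field_derivative_transform_within[OF d zero_less_one assms(2)]) (use eq in blast)
qed

lemma lip_xx:
  assumes dat: "PCdata \<psi>xx F B K" and pq: "p \<le> q" "0 \<le> p" "q \<le> 1"
    and diff: "\<forall>u\<in>{p..q}. \<psi>xx differentiable (at u within {0..1})"
  shows "\<forall>y\<in>{p..q}. \<forall>z\<in>{p..q}. \<bar>\<psi>xx y - \<psi>xx z\<bar> \<le> PCk_norm 1 \<psi>xx * \<bar>y - z\<bar>"
proof -
  let ?N = "PCk_norm 1 \<psi>xx"
  have N0: "0 \<le> ?N" using PCdata_nonneg[OF dat] .
  have finF: "finite F" using dat unfolding PCdata_def by auto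
  have main: "\<bar>\<psi>xx y - \<psi>xx z\<bar> \<le> ?N * (y - z)" if yz: "y \<in> {p..q}" "z \<in> {p..q}" "z \<le> y" for y z
  proof -
    have cont: "continuous_on {z..y} \<psi>xx"
    proof (rule continuous_on_eq_continuous_within[THEN iffD2], rule ballI)
      fix u assume u: "u \<in> {z..y}"
      then have "continuous (at u within {0..1}) \<psi>xx"
        using diff yz by (intro differentiable_imp_continuous_within) auto
      then show "continuous (at u within {z..y}) \<psi>xx"
        by (rule continuous_within_subset) (use yz pq in auto)
    qed
    define f' where "f' u = (if u \<in> {z<..<y} - F then (SOME d. (\<psi>xx has_real_derivative d) (at u)) else 0)" for u
    have fd: "(\<psi>xx has_real_derivative f' u) (at u) \<and> \<bar>f' u\<bar> \<le> ?N" if u: "u \<in> {z<..<y} - F" for u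
    proof -
      have u01: "u \<in> {0<..<1} - F" using u yz pq by auto
      obtain \<delta> where "\<delta> > 0" "Ck_on 1 \<psi>xx {u-\<delta>..u+\<delta>}" using dat u01 unfolding PCdata_def by blast
      then have ex: "\<exists>d. (\<psi>xx has_real_derivative d) (at u)" using loc_deriv_ex by blast
      have "(\<psi>xx has_real_derivative f' u) (at u)" unfolding f'_def using u someI_ex[OF ex] by simp
      then show ?thesis using PCdata_deriv[OF dat u01] by blast
    qed
    have "(f' has_integral (\<psi>xx y - \<psi>xx z)) {z..y}"
    proof (rule fundamental_theorem_of_calculus_interior_strong[OF finF yz(3) _ cont])
      fix u assume "u \<in> {z<..<y} - F"
      then show "(\<psi>xx has_vector_derivative f' u) (at u)"
        using fd by (simp add: has_real_derivative_iff_has_vector_derivative[symmetric])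
    qed
    then show ?thesis
      by (rule int_bound_real[OF _ yz(3) N0]) (use fd N0 in \<open>auto simp: f'_def\<close>)
  qed
  show ?thesis
  proof (intro ballI)
    fix y z assume "y \<in> {p..q}" "z \<in> {p..q}"
    then show "\<bar>\<psi>xx y - \<psi>xx z\<bar> \<le> ?N * \<bar>y - z\<bar>"
      using main[of y z] main[of z y] by (cases "z \<le> y") (auto simp: abs_minus_commute)
  qed
qed

lemma tay2:
  fixes \<psi> \<psi>x \<psi>xx :: "real \<Rightarrow> real" and x s M :: real
  defines "S \<equiv> {min x (x+s)..max x (x+s)}"
  assumes d1: "\<forall>u\<in>S. (\<psi> has_real_derivative \<psi>x u) (at u within S)"
    and d2: "\<forall>u\<in>S. (\<psi>x has_real_derivative \<psi>xx u) (at u within S)"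
    and lip: "\<forall>y\<in>S. \<forall>z\<in>S. \<bar>\<psi>xx y - \<psi>xx z\<bar> \<le> M * \<bar>y - z\<bar>"
    and M0: "0 \<le> M"
  shows "\<bar>\<psi> (x + s) - \<psi> x - s * \<psi>x x - s\<^sup>2 / 2 * \<psi>xx x\<bar> \<le> M * \<bar>s\<bar> ^ 3"
proof -
  have xS: "x \<in> S" unfolding S_def by auto
  have step1: "\<bar>\<psi>x u - \<psi>x x - (u - x) * \<psi>xx x\<bar> \<le> M * s\<^sup>2" if u: "u \<in> S" for u
  proof -
    let ?T = "{min x u..max x u}"
    have sub: "?T \<subseteq> S" using u xS unfolding S_def by auto
    have ux: "\<bar>u - x\<bar> \<le> \<bar>s\<bar>" using u unfolding S_def by auto
    have "\<bar>(\<lambda>v. \<psi>x v - v * \<psi>xx x) u - (\<lambda>v. \<psi>x v - v * \<psi>xx x) x\<bar> \<le> (M * \<bar>s\<bar>) * \<bar>u - x\<bar>"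
    proof (rule seg_bound)
      show "\<forall>v\<in>?T. ((\<lambda>v. \<psi>x v - v * \<psi>xx x) has_real_derivative \<psi>xx v - \<psi>xx x) (at v within ?T)"
      proof
        fix v assume v: "v \<in> ?T"
        have "(\<psi>x has_real_derivative \<psi>xx v) (at v within ?T)"
          using d2 v sub by (meson DERIV_subset subsetD)
        then show "((\<lambda>v. \<psi>x v - v * \<psi>xx x) has_real_derivative \<psi>xx v - \<psi>xx x) (at v within ?T)"
          by (auto intro!: derivative_eq_intros)
      qed
      show "\<forall>v\<in>?T. \<bar>\<psi>xx v - \<psi>xx x\<bar> \<le> M * \<bar>s\<bar>"
      proof
        fix v assume v: "v \<in> ?T"
        have "\<bar>\<psi>xx v - \<psi>xx x\<bar> \<le> M * \<bar>v - x\<bar>" using lip v sub xS by blast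
        also have "\<dots> \<le> M * \<bar>s\<bar>" using v ux M0 by (intro mult_left_mono) auto
        finally show "\<bar>\<psi>xx v - \<psi>xx x\<bar> \<le> M * \<bar>s\<bar>" .
      qed
    qed
    then have "\<bar>\<psi>x u - \<psi>x x - (u - x) * \<psi>xx x\<bar> \<le> (M * \<bar>s\<bar>) * \<bar>u - x\<bar>"
      by (simp add: algebra_simps)
    also have "\<dots> \<le> (M * \<bar>s\<bar>) * \<bar>s\<bar>" using ux M0 by (intro mult_left_mono) auto
    finally show ?thesis by (simp add: power2_eq_square mult.assoc)
  qed
  let ?f = "\<lambda>v. \<psi> v - v * \<psi>x x - (v - x)\<^sup>2 / 2 * \<psi>xx x"
  have A: "\<bar>?f (x + s) - ?f x\<bar> \<le> (M * s\<^sup>2) * \<bar>(x + s) - x\<bar>"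
  proof (rule seg_bound)
    show "\<forall>u\<in>{min x (x + s)..max x (x + s)}. (?f has_real_derivative \<psi>x u - \<psi>x x - (u - x) * \<psi>xx x)
            (at u within {min x (x + s)..max x (x + s)})"
    proof
      fix u assume u: "u \<in> {min x (x + s)..max x (x + s)}"
      have "(\<psi> has_real_derivative \<psi>x u) (at u within S)" using d1 u unfolding S_def by blast
      then show "(?f has_real_derivative \<psi>x u - \<psi>x x - (u - x) * \<psi>xx x) (at u within {min x (x + s)..max x (x + s)})"
        unfolding S_def by (auto intro!: derivative_eq_intros simp: power2_eq_square field_simps)
    qed
    show "\<forall>u\<in>{min x (x + s)..max x (x + s)}. \<bar>\<psi>x u - \<psi>x x - (u - x) * \<psi>xx x\<bar> \<le> M * s\<^sup>2"
      using step1 unfolding S_def by blast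
  qed
  have B: "?f (x + s) - ?f x = \<psi> (x + s) - \<psi> x - s * \<psi>x x - s\<^sup>2 / 2 * \<psi>xx x"
    by (simp add: algebra_simps)
  have C: "(M * s\<^sup>2) * \<bar>(x + s) - x\<bar> = M * \<bar>s\<bar> ^ 3"
    by (simp add: power2_eq_square power3_eq_cube abs_mult)
  have "\<bar>\<psi> (x + s) - \<psi> x - s * \<psi>x x - s\<^sup>2 / 2 * \<psi>xx x\<bar> = \<bar>?f (x + s) - ?f x\<bar>"
    by (simp only: B)
  also have "\<dots> \<le> (M * s\<^sup>2) * \<bar>(x + s) - x\<bar>" by (rule A)
  also have "\<dots> = M * \<bar>s\<bar> ^ 3" by (rule C)
  finally show ?thesis .
qed

lemma PC21_der: "PC21 \<psi> \<psi>x \<psi>xx \<Longrightarrow> \<forall>u\<in>{0..1}. (\<psi> has_real_derivative \<psi>x u) (at u within {0..1})"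
  unfolding PC21_def by auto

lemma tay1':
  assumes "PC21 \<psi> \<psi>x \<psi>xx" "x \<in> {0..1}" "x + s \<in> {0..1}"
  shows "\<bar>\<psi> (x + s) - \<psi> x - s * \<psi>x x\<bar> \<le> PC21_norm \<psi> \<psi>xx * s\<^sup>2"
  using tay1[OF PC21_der[OF assms(1)] PC21_facts(7)[OF assms(1)] PC21_facts(3)[OF assms(1)] assms(2,3)] .

lemma sd_any:
  assumes "PC21 \<psi> \<psi>x \<psi>xx" "h > 0" "0 \<le> x - h" "x + h \<le> 1"
  shows "\<bar>\<psi> (x - h) - 2 * \<psi> x + \<psi> (x + h)\<bar> \<le> 2 * PC21_norm \<psi> \<psi>xx * h\<^sup>2"
proof -
  have a: "\<bar>\<psi> (x + h) - \<psi> x - h * \<psi>x x\<bar> \<le> PC21_norm \<psi> \<psi>xx * h\<^sup>2"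
    by (rule tay1'[OF assms(1)]) (use assms in auto)
  have b: "\<bar>\<psi> (x + (-h)) - \<psi> x - (-h) * \<psi>x x\<bar> \<le> PC21_norm \<psi> \<psi>xx * (-h)\<^sup>2"
    by (rule tay1'[OF assms(1)]) (use assms in auto)
  show ?thesis using a b by (simp add: abs_le_iff)
qed

lemma bd_diff:
  assumes "PC21 \<psi> \<psi>x \<psi>xx" "h > 0" "0 \<le> x - h" "x \<le> 1"
  shows "\<bar>\<psi>x x - (\<psi> x - \<psi> (x - h)) / h\<bar> \<le> PC21_norm \<psi> \<psi>xx * h"
proof -
  have b: "\<bar>\<psi> (x + (-h)) - \<psi> x - (-h) * \<psi>x x\<bar> \<le> PC21_norm \<psi> \<psi>xx * (-h)\<^sup>2"
    by (rule tay1'[OF assms(1)]) (use assms in auto)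
  have "\<psi>x x - (\<psi> x - \<psi> (x - h)) / h = (\<psi> (x + (-h)) - \<psi> x - (-h) * \<psi>x x) / h"
    using assms(2) by (simp add: field_simps)
  also have "\<bar>\<dots>\<bar> \<le> PC21_norm \<psi> \<psi>xx * (-h)\<^sup>2 / h"
    using b assms(2) by (simp add: abs_divide divide_right_mono)
  also have "\<dots> = PC21_norm \<psi> \<psi>xx * h" using assms(2) by (simp add: power2_eq_square)
  finally show ?thesis .
qed

lemma sd_gen:
  assumes pc: "PC21 \<psi> \<psi>x \<psi>xx" and h: "h > 0" "0 \<le> x - h" "x + h \<le> 1"
    and diff: "\<forall>u\<in>{x-h..x+h}. \<psi>xx differentiable (at u within {0..1})"
  shows "\<bar>\<psi> (x - h) - 2 * \<psi> x + \<psi> (x + h) - h\<^sup>2 * \<psi>xx x\<bar> \<le> 2 * PC21_norm \<psi> \<psi>xx * h ^ 3"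
proof -
  let ?M = "PC21_norm \<psi> \<psi>xx"
  have pcxx: "PCk 1 \<psi>xx" using pc unfolding PC21_def by auto
  obtain F B K where dat: "PCdata \<psi>xx F B K" using PCk_to_data[OF pcxx] by blast
  have NM: "PCk_norm 1 \<psi>xx \<le> ?M" using PC21_facts(1)[OF pc] unfolding PC21_norm_def by simp
  have lip0: "\<forall>y\<in>{x-h..x+h}. \<forall>z\<in>{x-h..x+h}. \<bar>\<psi>xx y - \<psi>xx z\<bar> \<le> PCk_norm 1 \<psi>xx * \<bar>y - z\<bar>"
    by (rule lip_xx[OF dat]) (use h diff in auto)
  have lip: "\<forall>y\<in>{x-h..x+h}. \<forall>z\<in>{x-h..x+h}. \<bar>\<psi>xx y - \<psi>xx z\<bar> \<le> ?M * \<bar>y - z\<bar>"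
  proof (intro ballI)
    fix y z assume "y \<in> {x-h..x+h}" "z \<in> {x-h..x+h}"
    then have "\<bar>\<psi>xx y - \<psi>xx z\<bar> \<le> PCk_norm 1 \<psi>xx * \<bar>y - z\<bar>" using lip0 by blast
    also have "\<dots> \<le> ?M * \<bar>y - z\<bar>" using NM by (intro mult_right_mono) auto
    finally show "\<bar>\<psi>xx y - \<psi>xx z\<bar> \<le> ?M * \<bar>y - z\<bar>" .
  qed
  have d1: "(\<psi> has_real_derivative \<psi>x u) (at u within {0..1})" if "u \<in> {x-h..x+h}" for u
    using PC21_der[OF pc] that h by auto
  have d2: "(\<psi>x has_real_derivative \<psi>xx u) (at u within {0..1})" if u: "u \<in> {x-h..x+h}" for u
  proof (rule ftc_deriv[OF pc])
    show "u \<in> {0..1}" using u h by auto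
    show "continuous (at u within {0..1}) \<psi>xx" using diff u by (intro differentiable_imp_continuous_within) auto
  qed
  have M0: "0 \<le> ?M" using PC21_facts(3)[OF pc] .
  have t: "\<bar>\<psi> (x + s) - \<psi> x - s * \<psi>x x - s\<^sup>2 / 2 * \<psi>xx x\<bar> \<le> ?M * \<bar>s\<bar> ^ 3" if s: "s = h \<or> s = -h" for s
  proof (rule tay2)
    have sub: "{min x (x + s)..max x (x + s)} \<subseteq> {x-h..x+h}" "{x-h..x+h} \<subseteq> {0..1}" using s h by auto
    show "\<forall>u\<in>{min x (x + s)..max x (x + s)}. (\<psi> has_real_derivative \<psi>x u) (at u within {min x (x + s)..max x (x + s)})"
      using d1 sub by (meson DERIV_subset subsetD order_trans)
    show "\<forall>u\<in>{min x (x + s)..max x (x + s)}. (\<psi>x has_real_derivative \<psi>xx u) (at u within {min x (x + s)..max x (x + s)})"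
      using d2 sub by (meson DERIV_subset subsetD order_trans)
    show "\<forall>y\<in>{min x (x + s)..max x (x + s)}. \<forall>z\<in>{min x (x + s)..max x (x + s)}. \<bar>\<psi>xx y - \<psi>xx z\<bar> \<le> ?M * \<bar>y - z\<bar>"
      using lip sub by blast
  qed (rule M0)
  have a: "\<bar>\<psi> (x + h) - \<psi> x - h * \<psi>x x - h\<^sup>2 / 2 * \<psi>xx x\<bar> \<le> ?M * h ^ 3" using t[of h] h by simp
  have b: "\<bar>\<psi> (x + (-h)) - \<psi> x - (-h) * \<psi>x x - (-h)\<^sup>2 / 2 * \<psi>xx x\<bar> \<le> ?M * h ^ 3" using t[of "-h"] h by simp
  show ?thesis using a b by (simp add: abs_le_iff power2_eq_square)
qed

lemma tri_add: "\<bar>a\<bar> \<le> A \<Longrightarrow> \<bar>b\<bar> \<le> B \<Longrightarrow> \<bar>a + b\<bar> \<le> A + (B::real)"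
  by linarith

lemma tri_diff: "\<bar>a\<bar> \<le> A \<Longrightarrow> \<bar>b\<bar> \<le> B \<Longrightarrow> \<bar>a - b\<bar> \<le> A + (B::real)"
  by linarith

lemma row1_A:
  assumes pc: "PC21 \<psi> \<psi>x \<psi>xx" and bc: "\<alpha>0 * \<psi>x 0 + \<beta>0 * \<psi> 0 = 0"
    and D0: "3 * \<alpha>0 - 2 * h * \<beta>0 \<noteq> 0" "\<bar>\<alpha>0\<bar> \<le> \<bar>3 * \<alpha>0 - 2 * h * \<beta>0\<bar>"
    and h: "h > 0" "2 * h \<le> 1"
  shows "\<bar>\<psi>xx h - ((4 * (\<alpha>0 / (3 * \<alpha>0 - 2 * h * \<beta>0)) - 2) * \<psi> h
            + (1 - \<alpha>0 / (3 * \<alpha>0 - 2 * h * \<beta>0)) * \<psi> (2 * h)) / h\<^sup>2\<bar> \<le> 11 * PC21_norm \<psi> \<psi>xx"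
proof -
  let ?M = "PC21_norm \<psi> \<psi>xx"
  define D where "D = 3 * \<alpha>0 - 2 * h * \<beta>0"
  define r where "r = \<alpha>0 / D"
  have M0: "0 \<le> ?M" using PC21_facts(3)[OF pc] .
  have t1: "\<bar>\<psi> (0 + h) - \<psi> 0 - h * \<psi>x 0\<bar> \<le> ?M * h\<^sup>2" by (rule tay1'[OF pc]) (use h in auto)
  have t2: "\<bar>\<psi> (0 + 2*h) - \<psi> 0 - (2*h) * \<psi>x 0\<bar> \<le> ?M * (2*h)\<^sup>2" by (rule tay1'[OF pc]) (use h in auto)
  have E: "\<bar>4 * \<psi> h - \<psi> (2*h) - 3 * \<psi> 0 - 2 * h * \<psi>x 0\<bar> \<le> 8 * ?M * h\<^sup>2"
    using t1 t2 by (simp add: abs_le_iff power2_eq_square algebra_simps)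
  have Dne: "D \<noteq> 0" using D0 by (simp add: D_def)
  have eq1: "r * (4 * \<psi> h - \<psi> (2*h)) - \<psi> 0 = (\<alpha>0 / D) * (4 * \<psi> h - \<psi> (2*h) - 3 * \<psi> 0 - 2 * h * \<psi>x 0)"
  proof -
    have b: "\<beta>0 * \<psi> 0 = - \<alpha>0 * \<psi>x 0" using bc by linarith
    define A where "A = 4 * \<psi> h - \<psi> (2*h)"
    have "r * A - \<psi> 0 = (\<alpha>0 * A - D * \<psi> 0) / D" using Dne by (simp add: r_def field_simps)
    also have "D * \<psi> 0 = 3 * \<alpha>0 * \<psi> 0 - 2 * h * (\<beta>0 * \<psi> 0)" by (simp add: D_def algebra_simps)
    also have "\<dots> = 3 * \<alpha>0 * \<psi> 0 + 2 * h * \<alpha>0 * \<psi>x 0" using b by simp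
    also have "\<alpha>0 * A - (3 * \<alpha>0 * \<psi> 0 + 2 * h * \<alpha>0 * \<psi>x 0) = \<alpha>0 * (A - 3 * \<psi> 0 - 2 * h * \<psi>x 0)"
      by (simp add: algebra_simps)
    finally show ?thesis unfolding A_def by simp
  qed
  have rD: "\<bar>\<alpha>0 / D\<bar> \<le> 1" using D0 Dne by (simp add: D_def abs_divide divide_le_eq_1)
  have e2: "\<bar>r * (4 * \<psi> h - \<psi> (2*h)) - \<psi> 0\<bar> \<le> 8 * ?M * h\<^sup>2"
  proof -
    have "\<bar>r * (4 * \<psi> h - \<psi> (2*h)) - \<psi> 0\<bar> = \<bar>\<alpha>0 / D\<bar> * \<bar>4 * \<psi> h - \<psi> (2*h) - 3 * \<psi> 0 - 2 * h * \<psi>x 0\<bar>"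
      unfolding eq1 abs_mult ..
    also have "\<dots> \<le> 1 * (8 * ?M * h\<^sup>2)" by (rule mult_mono) (use rD E in auto)
    finally show ?thesis by simp
  qed
  have e1: "\<bar>\<psi> (h - h) - 2 * \<psi> h + \<psi> (h + h)\<bar> \<le> 2 * ?M * h\<^sup>2" by (rule sd_any[OF pc]) (use h in auto)
  have num: "(4 * r - 2) * \<psi> h + (1 - r) * \<psi> (2 * h) = (\<psi> (h - h) - 2 * \<psi> h + \<psi> (h + h)) + (r * (4 * \<psi> h - \<psi> (2*h)) - \<psi> 0)"
    by (simp add: algebra_simps mult_2)
  have "\<bar>(4 * r - 2) * \<psi> h + (1 - r) * \<psi> (2 * h)\<bar> \<le> 10 * ?M * h\<^sup>2" unfolding num using e1 e2 by (simp add: abs_le_iff)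
  then have "\<bar>((4 * r - 2) * \<psi> h + (1 - r) * \<psi> (2 * h)) / h\<^sup>2\<bar> \<le> 10 * ?M"
    using h by (simp add: abs_divide divide_le_eq)
  moreover have "\<bar>\<psi>xx h\<bar> \<le> ?M" using PC21_facts(6)[OF pc] h by auto
  ultimately have "\<bar>\<psi>xx h - ((4 * r - 2) * \<psi> h + (1 - r) * \<psi> (2 * h)) / h\<^sup>2\<bar> \<le> ?M + 10 * ?M"
    by (intro tri_diff)
  then have "\<bar>\<psi>xx h - ((4 * r - 2) * \<psi> h + (1 - r) * \<psi> (2 * h)) / h\<^sup>2\<bar> \<le> 11 * ?M" by simp
  then show ?thesis by (simp only: r_def D_def)
qed

lemma row1_B:
  assumes pc: "PC21 \<psi> \<psi>x \<psi>xx" and bc: "\<alpha>0 * \<psi>x 0 + \<beta>0 * \<psi> 0 = 0"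
    and ne: "\<alpha>0 - h * \<beta>0 \<noteq> 0" and small: "\<alpha>0 = 0 \<or> h * \<bar>\<beta>0\<bar> \<le> \<bar>\<alpha>0\<bar> / 2"
    and h: "h > 0" "h \<le> 1"
  shows "\<bar>\<psi>x h - (- \<beta>0 / (\<alpha>0 - h * \<beta>0)) * \<psi> h\<bar> \<le> (3 + 2 * \<bar>\<beta>0\<bar> / \<bar>\<alpha>0\<bar>) * PC21_norm \<psi> \<psi>xx"
proof -
  let ?M = "PC21_norm \<psi> \<psi>xx"
  have M0: "0 \<le> ?M" using PC21_facts(3)[OF pc] .
  have bx: "\<bar>\<psi>x h\<bar> \<le> ?M" using PC21_facts(5)[OF pc] h by auto
  have b0: "\<bar>\<psi> h\<bar> \<le> ?M" using PC21_facts(4)[OF pc] h by auto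
  have c0: "0 \<le> 2 * \<bar>\<beta>0\<bar> / \<bar>\<alpha>0\<bar>" by simp
  show ?thesis
  proof (cases "\<alpha>0 = 0")
    case True
    then have b0ne: "\<beta>0 \<noteq> 0" using ne by auto
    then have p0: "\<psi> 0 = 0" using bc True by simp
    have t1: "\<bar>\<psi> (0 + h) - \<psi> 0 - h * \<psi>x 0\<bar> \<le> ?M * h\<^sup>2" by (rule tay1'[OF pc]) (use h in auto)
    have bx0: "\<bar>\<psi>x 0\<bar> \<le> ?M" using PC21_facts(5)[OF pc] by auto
    have "\<bar>h * \<psi>x 0\<bar> \<le> h * ?M" using bx0 h by (simp add: abs_mult mult_left_mono)
    moreover have "?M * h\<^sup>2 \<le> ?M * h"
    proof -
      have "h * h \<le> h" using h by (intro mult_left_le) auto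
      then show ?thesis using M0 by (simp add: power2_eq_square mult_left_mono)
    qed
    ultimately have "\<bar>(\<psi> (0 + h) - \<psi> 0 - h * \<psi>x 0) + h * \<psi>x 0\<bar> \<le> ?M * h\<^sup>2 + h * ?M"
      using t1 by (intro tri_add) auto
    then have "\<bar>\<psi> h\<bar> \<le> ?M * h\<^sup>2 + h * ?M" using p0 by simp
    then have "\<bar>\<psi> h\<bar> \<le> 2 * (?M * h)" using \<open>?M * h\<^sup>2 \<le> ?M * h\<close> mult.commute[of h ?M] by linarith
    then have "\<bar>\<psi> h / h\<bar> \<le> 2 * ?M" using h by (simp add: abs_divide divide_le_eq algebra_simps)
    moreover have "- \<beta>0 / (\<alpha>0 - h * \<beta>0) = 1 / h" using True b0ne h by (simp add: field_simps)
    ultimately have "\<bar>(- \<beta>0 / (\<alpha>0 - h * \<beta>0)) * \<psi> h\<bar> \<le> 2 * ?M" by simp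
    then have "\<bar>\<psi>x h - (- \<beta>0 / (\<alpha>0 - h * \<beta>0)) * \<psi> h\<bar> \<le> ?M + 2 * ?M" using bx by (intro tri_diff)
    then have "\<bar>\<psi>x h - (- \<beta>0 / (\<alpha>0 - h * \<beta>0)) * \<psi> h\<bar> \<le> 3 * ?M" by simp
    also have "\<dots> \<le> (3 + 2 * \<bar>\<beta>0\<bar> / \<bar>\<alpha>0\<bar>) * ?M" using M0 c0 by (simp add: mult_right_mono)
    finally show ?thesis .
  next
    case False
    then have sm: "h * \<bar>\<beta>0\<bar> \<le> \<bar>\<alpha>0\<bar> / 2" using small by auto
    have "\<bar>h * \<beta>0\<bar> \<le> \<bar>\<alpha>0\<bar> / 2" using sm h by (simp add: abs_mult)
    then have ge: "\<bar>\<alpha>0 - h * \<beta>0\<bar> \<ge> \<bar>\<alpha>0\<bar> / 2" using abs_triangle_ineq2[of \<alpha>0 "h * \<beta>0"] by linarith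
    have pos: "0 < \<bar>\<alpha>0\<bar> / 2" using False by simp
    have "\<bar>\<beta>0\<bar> / \<bar>\<alpha>0 - h * \<beta>0\<bar> \<le> \<bar>\<beta>0\<bar> / (\<bar>\<alpha>0\<bar> / 2)"
      by (rule divide_left_mono) (use ge pos ne in \<open>auto intro!: mult_pos_pos\<close>)
    then have q: "\<bar>- \<beta>0 / (\<alpha>0 - h * \<beta>0)\<bar> \<le> 2 * \<bar>\<beta>0\<bar> / \<bar>\<alpha>0\<bar>"
      by (simp add: abs_divide mult.commute)
    have "\<bar>(- \<beta>0 / (\<alpha>0 - h * \<beta>0)) * \<psi> h\<bar> \<le> (2 * \<bar>\<beta>0\<bar> / \<bar>\<alpha>0\<bar>) * ?M"
      unfolding abs_mult by (rule mult_mono) (use q b0 c0 in auto)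
    then have "\<bar>\<psi>x h - (- \<beta>0 / (\<alpha>0 - h * \<beta>0)) * \<psi> h\<bar> \<le> ?M + (2 * \<bar>\<beta>0\<bar> / \<bar>\<alpha>0\<bar>) * ?M"
      using bx by (intro tri_diff)
    moreover have "?M + (2 * \<bar>\<beta>0\<bar> / \<bar>\<alpha>0\<bar>) * ?M \<le> (3 + 2 * \<bar>\<beta>0\<bar> / \<bar>\<alpha>0\<bar>) * ?M"
      using M0 by (simp add: distrib_right)
    ultimately show ?thesis by linarith
  qed
qed

lemma rown_A:
  assumes pc: "PC21 \<psi> \<psi>x \<psi>xx"
    and D1: "3 * \<alpha>1 + 2 * h * \<beta>1 \<noteq> 0" "\<bar>\<alpha>1\<bar> \<le> \<bar>3 * \<alpha>1 + 2 * h * \<beta>1\<bar>"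
    and h: "h > 0" "2 * h \<le> 1" and x: "x = 1 - h"
  shows "\<bar>\<psi>xx x - ((1 - \<alpha>1 / (3 * \<alpha>1 + 2 * h * \<beta>1)) * \<psi> (x - h)
            + (4 * (\<alpha>1 / (3 * \<alpha>1 + 2 * h * \<beta>1)) - 2) * \<psi> x
            + 2 * h * (\<alpha>1 * \<psi>x 1 + \<beta>1 * \<psi> 1) / (3 * \<alpha>1 + 2 * h * \<beta>1)) / h\<^sup>2\<bar>
         \<le> 11 * PC21_norm \<psi> \<psi>xx"
proof -
  let ?M = "PC21_norm \<psi> \<psi>xx"
  define D where "D = 3 * \<alpha>1 + 2 * h * \<beta>1"
  define r where "r = \<alpha>1 / D"
  have M0: "0 \<le> ?M" using PC21_facts(3)[OF pc] .
  have t1: "\<bar>\<psi> (1 + (-h)) - \<psi> 1 - (-h) * \<psi>x 1\<bar> \<le> ?M * (-h)\<^sup>2" by (rule tay1'[OF pc]) (use h in auto)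
  have t2: "\<bar>\<psi> (1 + (-2*h)) - \<psi> 1 - (-2*h) * \<psi>x 1\<bar> \<le> ?M * (-2*h)\<^sup>2" by (rule tay1'[OF pc]) (use h in auto)
  have E: "\<bar>4 * \<psi> x - \<psi> (x - h) - 3 * \<psi> 1 + 2 * h * \<psi>x 1\<bar> \<le> 8 * ?M * h\<^sup>2"
    using t1 t2 unfolding x by (simp add: abs_le_iff power2_eq_square algebra_simps)
  have Dne: "D \<noteq> 0" using D1 by (simp add: D_def)
  have eq1: "r * (4 * \<psi> x - \<psi> (x - h)) + 2 * h * (\<alpha>1 * \<psi>x 1 + \<beta>1 * \<psi> 1) / D - \<psi> 1
      = (\<alpha>1 / D) * (4 * \<psi> x - \<psi> (x - h) - 3 * \<psi> 1 + 2 * h * \<psi>x 1)"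
  proof -
    define A where "A = 4 * \<psi> x - \<psi> (x - h)"
    have "r * A + 2 * h * (\<alpha>1 * \<psi>x 1 + \<beta>1 * \<psi> 1) / D - \<psi> 1
        = (\<alpha>1 * A + 2 * h * (\<alpha>1 * \<psi>x 1 + \<beta>1 * \<psi> 1) - D * \<psi> 1) / D"
      using Dne by (simp add: r_def field_simps)
    also have "\<alpha>1 * A + 2 * h * (\<alpha>1 * \<psi>x 1 + \<beta>1 * \<psi> 1) - D * \<psi> 1 = \<alpha>1 * (A - 3 * \<psi> 1 + 2 * h * \<psi>x 1)"
      by (simp add: D_def algebra_simps)
    finally show ?thesis unfolding A_def by simp
  qed
  have rD: "\<bar>\<alpha>1 / D\<bar> \<le> 1" using D1 Dne by (simp add: D_def abs_divide divide_le_eq_1)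
  have e2: "\<bar>r * (4 * \<psi> x - \<psi> (x - h)) + 2 * h * (\<alpha>1 * \<psi>x 1 + \<beta>1 * \<psi> 1) / D - \<psi> 1\<bar> \<le> 8 * ?M * h\<^sup>2"
  proof -
    have "\<bar>r * (4 * \<psi> x - \<psi> (x - h)) + 2 * h * (\<alpha>1 * \<psi>x 1 + \<beta>1 * \<psi> 1) / D - \<psi> 1\<bar>
        = \<bar>\<alpha>1 / D\<bar> * \<bar>4 * \<psi> x - \<psi> (x - h) - 3 * \<psi> 1 + 2 * h * \<psi>x 1\<bar>"
      unfolding eq1 abs_mult ..
    also have "\<dots> \<le> 1 * (8 * ?M * h\<^sup>2)" by (rule mult_mono) (use rD E in auto)
    finally show ?thesis by simp
  qed
  have e1: "\<bar>\<psi> (x - h) - 2 * \<psi> x + \<psi> (x + h)\<bar> \<le> 2 * ?M * h\<^sup>2" by (rule sd_any[OF pc]) (use h x in auto)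
  have xh: "x + h = 1" using x by simp
  have num: "(1 - r) * \<psi> (x - h) + (4 * r - 2) * \<psi> x + 2 * h * (\<alpha>1 * \<psi>x 1 + \<beta>1 * \<psi> 1) / D
     = (\<psi> (x - h) - 2 * \<psi> x + \<psi> (x + h)) + (r * (4 * \<psi> x - \<psi> (x - h)) + 2 * h * (\<alpha>1 * \<psi>x 1 + \<beta>1 * \<psi> 1) / D - \<psi> 1)"
    unfolding xh by (simp add: algebra_simps)
  have "\<bar>(1 - r) * \<psi> (x - h) + (4 * r - 2) * \<psi> x + 2 * h * (\<alpha>1 * \<psi>x 1 + \<beta>1 * \<psi> 1) / D\<bar> \<le> 10 * ?M * h\<^sup>2"
    unfolding num using e1 e2 by (simp add: abs_le_iff)
  then have "\<bar>((1 - r) * \<psi> (x - h) + (4 * r - 2) * \<psi> x + 2 * h * (\<alpha>1 * \<psi>x 1 + \<beta>1 * \<psi> 1) / D) / h\<^sup>2\<bar> \<le> 10 * ?M"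
    using h by (simp add: abs_divide divide_le_eq)
  moreover have "\<bar>\<psi>xx x\<bar> \<le> ?M" using PC21_facts(6)[OF pc] h x by auto
  ultimately have "\<bar>\<psi>xx x - ((1 - r) * \<psi> (x - h) + (4 * r - 2) * \<psi> x + 2 * h * (\<alpha>1 * \<psi>x 1 + \<beta>1 * \<psi> 1) / D) / h\<^sup>2\<bar> \<le> ?M + 10 * ?M"
    by (intro tri_diff)
  then have "\<bar>\<psi>xx x - ((1 - r) * \<psi> (x - h) + (4 * r - 2) * \<psi> x + 2 * h * (\<alpha>1 * \<psi>x 1 + \<beta>1 * \<psi> 1) / D) / h\<^sup>2\<bar> \<le> 11 * ?M" by simp
  then show ?thesis by (simp only: r_def D_def)
qed

lemma riemann_err:
  fixes g :: "real \<Rightarrow> real" and j :: nat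
  assumes cont: "continuous_on {0..1} g"
    and lip: "\<forall>s\<in>{0..1}. \<forall>s'\<in>{0..1}. \<bar>g s - g s'\<bar> \<le> L * \<bar>s - s'\<bar>"
    and L0: "0 \<le> L" and h: "h > 0"
  shows "real j * h \<le> 1 \<Longrightarrow> \<bar>integral {0..real j * h} g - h * (\<Sum>m=1..j. g (real m * h))\<bar> \<le> L * h * (real j * h)"
proof (induction j)
  case 0
  then show ?case by simp
next
  case (Suc j)
  define a where "a = real j * h"
  define b where "b = real (Suc j) * h"
  have ab: "b = a + h" unfolding a_def b_def by (simp add: algebra_simps)
  have a0: "0 \<le> a" unfolding a_def using h by simp
  have b1: "b \<le> 1" using Suc.prems unfolding b_def .
  have a1: "a \<le> 1" using b1 ab h by simp
  have IH: "\<bar>integral {0..a} g - h * (\<Sum>m=1..j. g (real m * h))\<bar> \<le> L * h * a"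
    using Suc.IH a1 unfolding a_def by blast
  have ib: "g integrable_on {0..b}"
    by (rule integrable_continuous_real, rule continuous_on_subset[OF cont]) (use b1 in auto)
  have comb: "integral {0..a} g + integral {a..b} g = integral {0..b} g"
    by (rule Henstock_Kurzweil_Integration.integral_combine[OF a0 _ ib]) (use ab h in auto)
  have iab: "g integrable_on {a..b}"
    by (rule integrable_subinterval_real[OF ib]) (use a0 in auto)
  have hc: "((\<lambda>s. g b) has_integral (h * g b)) {a..b}"
    using has_integral_const_real[of "g b" a b] ab h by (simp add: content_real)
  have hi: "((\<lambda>s. g s - g b) has_integral (integral {a..b} g - h * g b)) {a..b}"
    by (rule has_integral_diff[OF integrable_integral[OF iab] hc])
  have piece: "\<bar>integral {a..b} g - h * g b\<bar> \<le> (L * h) * (b - a)"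
  proof (rule int_bound_real[OF hi])
    show "a \<le> b" "0 \<le> L * h" using ab h L0 by auto
    fix s assume s: "s \<in> {a..b}"
    have sb: "s \<in> {0..1}" "b \<in> {0..1}" using s a0 b1 by auto
    have "\<bar>g s - g b\<bar> \<le> L * \<bar>s - b\<bar>" using lip sb by blast
    also have "\<dots> \<le> L * h" using s ab L0 by (intro mult_left_mono) auto
    finally show "\<bar>g s - g b\<bar> \<le> L * h" .
  qed
  have sum: "(\<Sum>m=1..Suc j. g (real m * h)) = (\<Sum>m=1..j. g (real m * h)) + g b"
  proof -
    have "(\<Sum>m=1..Suc j. g (real m * h)) = (\<Sum>m=1..j. g (real m * h)) + g (real (Suc j) * h)"
      by (rule sum.cl_ivl_Suc[THEN trans]) simp
    then show ?thesis unfolding b_def .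
  qed
  have "integral {0..b} g - h * (\<Sum>m=1..Suc j. g (real m * h))
      = (integral {0..a} g - h * (\<Sum>m=1..j. g (real m * h))) + (integral {a..b} g - h * g b)"
    using comb sum by (simp add: algebra_simps)
  then have "\<bar>integral {0..b} g - h * (\<Sum>m=1..Suc j. g (real m * h))\<bar> \<le> L * h * a + (L * h) * (b - a)"
    using tri_add[OF IH piece] by simp
  also have "\<dots> = L * h * b" by (simp add: algebra_simps)
  finally show ?case unfolding b_def .
qed

lemma PCdata_diffble:
  assumes "PCdata f F B K" "y \<in> {0<..<1} - F"
  shows "f differentiable (at y within {0..1})"
proof -
  obtain \<delta> where "\<delta> > 0" "Ck_on 1 f {y-\<delta>..y+\<delta>}" using assms unfolding PCdata_def by blast
  then obtain d where "(f has_real_derivative d) (at y)" using loc_deriv_ex by blast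
  then have "(f has_real_derivative d) (at y within {0..1})" by (rule DERIV_subset) simp
  then show ?thesis unfolding has_field_derivative_def by (rule differentiableI)
qed

lemma Iset_finite:
  assumes "PCk 1 \<theta>" "PCk 1 \<sigma>" "PCk 1 lam"
  shows "finite (Iset \<theta> \<sigma> lam)"
proof -
  obtain F1 B1 K1 where d1: "PCdata \<theta> F1 B1 K1" using PCk_to_data[OF assms(1)] by blast
  obtain F2 B2 K2 where d2: "PCdata \<sigma> F2 B2 K2" using PCk_to_data[OF assms(2)] by blast
  obtain F3 B3 K3 where d3: "PCdata lam F3 B3 K3" using PCk_to_data[OF assms(3)] by blast
  have "Iset \<theta> \<sigma> lam \<subseteq> F1 \<union> F2 \<union> F3 \<union> {0, 1}"
  proof
    fix y assume y: "y \<in> Iset \<theta> \<sigma> lam"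
    show "y \<in> F1 \<union> F2 \<union> F3 \<union> {0, 1}"
    proof (rule ccontr)
      assume "y \<notin> F1 \<union> F2 \<union> F3 \<union> {0, 1}"
      then have "y \<in> {0<..<1} - F1" "y \<in> {0<..<1} - F2" "y \<in> {0<..<1} - F3" using y
        by (auto simp: Iset_def)
      then show False using y PCdata_diffble[OF d1] PCdata_diffble[OF d2] PCdata_diffble[OF d3]
        unfolding Iset_def by blast
    qed
  qed
  moreover have "finite (F1 \<union> F2 \<union> F3 \<union> {0, 1})" using d1 d2 d3 unfolding PCdata_def by auto
  ultimately show ?thesis by (rule finite_subset)
qed

lemma PCk_bounded:
  assumes "PCk 1 f"
  shows "\<exists>B\<ge>0. \<forall>x\<in>{0..1}. \<bar>f x\<bar> \<le> B"
proof -
  obtain F B K where d: "PCdata f F B K" using PCk_to_data[OF assms] by blast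
  then have b: "\<forall>x\<in>{0..1}. \<bar>f x\<bar> \<le> B" unfolding PCdata_def by blast
  then have "0 \<le> B" using abs_ge_zero[of "f 0"] by force
  then show ?thesis using b by blast
qed

lemma tri_sum:
  fixes v :: "nat \<Rightarrow> real"
  assumes "1 \<le> i" "i \<le> n"
  shows "(\<Sum>j=1..n. (if i = j then a else if j = i + 1 then b else if i = j + 1 then c else 0) * v j)
        = a * v i + (if i < n then b * v (i+1) else 0) + (if 1 < i then c * v (i - 1) else 0)"
proof -
  have "(\<Sum>j=1..n. (if i = j then a else if j = i + 1 then b else if i = j + 1 then c else 0) * v j)
      = (\<Sum>j=1..n. (if j = i then a * v i else 0) + (if j = i + 1 then b * v (i+1) else 0)
                  + (if j = i - 1 then (if 1 < i then c * v (i - 1) else 0) else 0))"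
    by (rule sum.cong) (use assms in auto)
  also have "\<dots> = a * v i + (if i < n then b * v (i+1) else 0) + (if 1 < i then c * v (i - 1) else 0)"
    using assms by (simp add: sum.distrib) auto
  finally show ?thesis .
qed

lemma M_mid:
  assumes "2 \<le> i" "i + 1 \<le> n"
  shows "(\<Sum>j=1..n. Mmat \<alpha>0 \<beta>0 \<alpha>1 \<beta>1 n i j * v j) = v (i - 1) - 2 * v i + v (i + 1)"
  unfolding Mmat_def using tri_sum[of i n] assms by simp

lemma M_1:
  assumes "2 \<le> n"
  shows "(\<Sum>j=1..n. Mmat \<alpha>0 \<beta>0 \<alpha>1 \<beta>1 n 1 j * v j)
     = (4 * r0 \<alpha>0 \<beta>0 n - 2) * v 1 + (1 - r0 \<alpha>0 \<beta>0 n) * v 2"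
  unfolding Mmat_def using tri_sum[of 1 n] assms by (simp add: numeral_2_eq_2)

lemma M_n:
  assumes "3 \<le> n"
  shows "(\<Sum>j=1..n. Mmat \<alpha>0 \<beta>0 \<alpha>1 \<beta>1 n n j * v j)
     = (4 * r1 \<alpha>1 \<beta>1 n - 2) * v n + (1 - r1 \<alpha>1 \<beta>1 n) * v (n - 1)"
  unfolding Mmat_def using tri_sum[of n n] assms by simp

lemma N_ge2:
  assumes "2 \<le> i" "i \<le> n"
  shows "(\<Sum>j=1..n. Nmat \<alpha>0 \<beta>0 n i j * v j) = v i - v (i - 1)"
proof -
  have "(\<Sum>j=1..n. Nmat \<alpha>0 \<beta>0 n i j * v j)
     = (\<Sum>j=1..n. (if i = j then 1 else if j = i + 1 then 0 else if i = j + 1 then -1 else 0) * v j)"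
    by (rule sum.cong) (use assms in \<open>auto simp: Nmat_def\<close>)
  also have "\<dots> = v i - v (i - 1)" using tri_sum[of i n 1 0 "-1" v] assms by simp
  finally show ?thesis .
qed

lemma N_1:
  assumes "1 \<le> n"
  shows "(\<Sum>j=1..n. Nmat \<alpha>0 \<beta>0 n 1 j * v j) = hstep n * q0 \<alpha>0 \<beta>0 n * v 1"
proof -
  have "(\<Sum>j=1..n. Nmat \<alpha>0 \<beta>0 n 1 j * v j) = (\<Sum>j=1..n. if j = 1 then hstep n * q0 \<alpha>0 \<beta>0 n * v 1 else 0)"
    by (rule sum.cong) (auto simp: Nmat_def)
  also have "\<dots> = hstep n * q0 \<alpha>0 \<beta>0 n * v 1" using assms by simp
  finally show ?thesis .
qed

lemma Phi_sum:
  assumes "i \<le> n"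
  shows "(\<Sum>j=1..n. Phimat \<phi> n i j * v j) = hstep n * (\<Sum>m=1..i. \<phi> (real i * hstep n) (real m * hstep n) * v m)"
proof -
  have "(\<Sum>j=1..n. Phimat \<phi> n i j * v j) = (\<Sum>j=1..n. if j \<le> i then hstep n * \<phi> (real i * hstep n) (real j * hstep n) * v j else 0)"
    by (rule sum.cong) (auto simp: Phimat_def)
  also have "\<dots> = (\<Sum>j\<in>{j\<in>{1..n}. j \<le> i}. hstep n * \<phi> (real i * hstep n) (real j * hstep n) * v j)"
    by (rule sum.inter_filter[symmetric]) simp
  also have "{j\<in>{1..n}. j \<le> i} = {1..i}" using assms by auto
  finally show ?thesis by (simp add: sum_distrib_left mult.assoc)
qed

lemma matvec_P:
  assumes "1 \<le> i" "i \<le> n"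
  shows "matvec n (Pmat \<theta> \<sigma> lam \<phi> \<alpha>0 \<beta>0 \<alpha>1 \<beta>1 n) v i
    = \<theta> (real i * hstep n) * (\<Sum>j=1..n. Mmat \<alpha>0 \<beta>0 \<alpha>1 \<beta>1 n i j * v j) / (hstep n)\<^sup>2
    + \<sigma> (real i * hstep n) * (\<Sum>j=1..n. Nmat \<alpha>0 \<beta>0 n i j * v j) / hstep n
    + lam (real i * hstep n) * v i
    + hstep n * (\<Sum>m=1..i. \<phi> (real i * hstep n) (real m * hstep n) * v m)"
proof -
  let ?h = "hstep n"
  have "matvec n (Pmat \<theta> \<sigma> lam \<phi> \<alpha>0 \<beta>0 \<alpha>1 \<beta>1 n) v i
     = (\<Sum>j=1..n. \<theta> (real i * ?h) * (Mmat \<alpha>0 \<beta>0 \<alpha>1 \<beta>1 n i j * v j) / ?h\<^sup>2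
          + \<sigma> (real i * ?h) * (Nmat \<alpha>0 \<beta>0 n i j * v j) / ?h
          + (if j = i then lam (real i * ?h) * v i else 0)
          + Phimat \<phi> n i j * v j)"
    unfolding matvec_def
    by (rule sum.cong) (auto simp: Pmat_def Lmat_def Dmat_def algebra_simps)
  also have "\<dots> = \<theta> (real i * ?h) * (\<Sum>j=1..n. Mmat \<alpha>0 \<beta>0 \<alpha>1 \<beta>1 n i j * v j) / ?h\<^sup>2
    + \<sigma> (real i * ?h) * (\<Sum>j=1..n. Nmat \<alpha>0 \<beta>0 n i j * v j) / ?h
    + lam (real i * ?h) * v i
    + (\<Sum>j=1..n. Phimat \<phi> n i j * v j)"
    using assms by (simp add: sum.distrib sum_distrib_left sum_divide_distrib)
  also have "(\<Sum>j=1..n. Phimat \<phi> n i j * v j) = ?h * (\<Sum>m=1..i. \<phi> (real i * ?h) (real m * ?h) * v m)"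
    by (rule Phi_sum[OF assms(2)])
  finally show ?thesis .
qed

lemma count3:
  assumes h: "h > 0"
  shows "finite {i::nat. \<bar>real i * h - c\<bar> \<le> h} \<and> card {i::nat. \<bar>real i * h - c\<bar> \<le> h} \<le> 3"
proof -
  define K where "K = \<lceil>c / h - 1\<rceil>"
  have sub: "{i::nat. \<bar>real i * h - c\<bar> \<le> h} \<subseteq> nat ` {K..K+2}"
  proof
    fix i :: nat assume "i \<in> {i::nat. \<bar>real i * h - c\<bar> \<le> h}"
    then have "\<bar>real i * h - c\<bar> \<le> h" by simp
    then have "\<bar>real i - c / h\<bar> \<le> 1" using h
      by (simp add: abs_le_iff field_simps)
    then have lo: "c / h - 1 \<le> real i" and hi: "real i \<le> c / h + 1" by auto
    have "K \<le> int i" unfolding K_def using lo ceiling_le_iff[of "c / h - 1" "int i"] by simp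
    moreover have "int i \<le> K + 2"
    proof -
      have "c / h - 1 \<le> real_of_int K" unfolding K_def by simp
      then have "real i < real_of_int K + 3" using hi by linarith
      then show ?thesis by linarith
    qed
    ultimately have "int i \<in> {K..K+2}" by simp
    then show "i \<in> nat ` {K..K+2}" by (metis image_eqI nat_int)
  qed
  have "card (nat ` {K..K+2}) \<le> card {K..K+2}" by (rule card_image_le) simp
  also have "\<dots> = 3" by simp
  finally have "card (nat ` {K..K+2}) \<le> 3" .
  moreover have "finite (nat ` {K..K+2})" by simp
  ultimately show ?thesis using sub card_mono finite_subset by (metis order_trans)
qed

lemma card_NG:
  fixes I :: "real set"
  assumes finI: "finite I" and h: "h > 0"
  shows "card {i\<in>{1..n}. i = 1 \<or> i = n \<or> (\<exists>c\<in>I. \<bar>real i * h - c\<bar> \<le> h)} \<le> 2 + 3 * card I"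
proof -
  let ?S = "\<lambda>c. {i::nat. \<bar>real i * h - c\<bar> \<le> h}"
  have sub: "{i\<in>{1..n}. i = 1 \<or> i = n \<or> (\<exists>c\<in>I. \<bar>real i * h - c\<bar> \<le> h)} \<subseteq> {1, n} \<union> (\<Union>c\<in>I. ?S c)"
    by auto
  have finS: "\<And>c. finite (?S c)" using count3[OF h] by blast
  have fin: "finite ({1, n} \<union> (\<Union>c\<in>I. ?S c))" using finI finS by auto
  have "card (\<Union>c\<in>I. ?S c) \<le> (\<Sum>c\<in>I. card (?S c))" by (rule card_UN_le[OF finI])
  also have "\<dots> \<le> (\<Sum>c\<in>I. 3)" by (rule sum_mono) (use count3[OF h] in blast)
  also have "\<dots> = 3 * card I" by simp
  finally have u: "card (\<Union>c\<in>I. ?S c) \<le> 3 * card I" .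
  have "card ({1, n} \<union> (\<Union>c\<in>I. ?S c)) \<le> card {1, n} + card (\<Union>c\<in>I. ?S c)" by (rule card_Un_le)
  also have "card {1, n} \<le> 2" by (simp add: card_insert_le_m1)
  finally have "card ({1, n} \<union> (\<Union>c\<in>I. ?S c)) \<le> 2 + 3 * card I" using u by linarith
  then show ?thesis using card_mono[OF fin sub] by linarith
qed

lemma sum_bound:
  fixes E :: "nat \<Rightarrow> real"
  assumes all: "\<forall>i\<in>{1..n}. \<bar>E i\<bar> \<le> C2 * M"
    and gen: "\<forall>i\<in>{1..n} - NG. \<bar>E i\<bar> \<le> C1 * M * h"
    and NG: "NG \<subseteq> {1..n}" "card NG \<le> K"
    and pos: "0 \<le> C1" "0 \<le> C2" "0 \<le> M" "h > 0" "real n * h\<^sup>2 \<le> 1"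
  shows "sqrt h * sqrt (\<Sum>i=1..n. (E i)\<^sup>2) \<le> sqrt (C1\<^sup>2 + real K * C2\<^sup>2) * sqrt h * M"
proof -
  have pt: "(E i)\<^sup>2 \<le> (C1 * M * h)\<^sup>2 + (if i \<in> NG then (C2 * M)\<^sup>2 else 0)" if i: "i \<in> {1..n}" for i
  proof (cases "i \<in> NG")
    case True
    have "\<bar>E i\<bar> \<le> C2 * M" using all i by blast
    then have "(E i)\<^sup>2 \<le> (C2 * M)\<^sup>2" by (metis abs_ge_zero power2_abs power_mono)
    then have "(E i)\<^sup>2 \<le> (C1 * M * h)\<^sup>2 + (C2 * M)\<^sup>2" using zero_le_power2[of "C1 * M * h"] by linarith
    then show ?thesis using True by simp
  next
    case False
    have "\<bar>E i\<bar> \<le> C1 * M * h" using gen i False by blast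
    then have "(E i)\<^sup>2 \<le> (C1 * M * h)\<^sup>2" by (metis abs_ge_zero power2_abs power_mono)
    then show ?thesis using False by simp
  qed
  have "(\<Sum>i=1..n. (E i)\<^sup>2) \<le> (\<Sum>i=1..n. (C1 * M * h)\<^sup>2 + (if i \<in> NG then (C2 * M)\<^sup>2 else 0))"
    by (rule sum_mono) (rule pt)
  also have "\<dots> = real n * (C1 * M * h)\<^sup>2 + (\<Sum>i\<in>{1..n}. if i \<in> NG then (C2 * M)\<^sup>2 else 0)"
    by (simp add: sum.distrib)
  also have "(\<Sum>i\<in>{1..n}. if i \<in> NG then (C2 * M)\<^sup>2 else 0) = real (card NG) * (C2 * M)\<^sup>2"
  proof -
    have "(\<Sum>i\<in>{1..n}. if i \<in> NG then (C2 * M)\<^sup>2 else 0) = (\<Sum>i\<in>{i\<in>{1..n}. i \<in> NG}. (C2 * M)\<^sup>2)"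
      by (rule sum.inter_filter[symmetric]) simp
    also have "{i\<in>{1..n}. i \<in> NG} = NG" using NG(1) by auto
    finally show ?thesis by simp
  qed
  also have "real n * (C1 * M * h)\<^sup>2 = (real n * h\<^sup>2) * (C1 * M)\<^sup>2" by (simp add: power_mult_distrib)
  also have "\<dots> \<le> 1 * (C1 * M)\<^sup>2" by (rule mult_right_mono) (use pos in auto)
  also have "real (card NG) * (C2 * M)\<^sup>2 \<le> real K * (C2 * M)\<^sup>2" using NG(2) by (intro mult_right_mono) auto
  finally have "(\<Sum>i=1..n. (E i)\<^sup>2) \<le> (C1\<^sup>2 + real K * C2\<^sup>2) * M\<^sup>2"
    by (simp add: power_mult_distrib algebra_simps)
  then have "sqrt (\<Sum>i=1..n. (E i)\<^sup>2) \<le> sqrt ((C1\<^sup>2 + real K * C2\<^sup>2) * M\<^sup>2)" by (rule real_sqrt_le_mono)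
  also have "\<dots> = sqrt (C1\<^sup>2 + real K * C2\<^sup>2) * M" using pos by (simp add: real_sqrt_mult)
  finally have "sqrt (\<Sum>i=1..n. (E i)\<^sup>2) \<le> sqrt (C1\<^sup>2 + real K * C2\<^sup>2) * M" .
  then have "sqrt h * sqrt (\<Sum>i=1..n. (E i)\<^sup>2) \<le> sqrt h * (sqrt (C1\<^sup>2 + real K * C2\<^sup>2) * M)"
    by (rule mult_left_mono) (use pos in simp)
  then show ?thesis by (simp add: algebra_simps)
qed

lemma psi_cont: "PC21 \<psi> \<psi>x \<psi>xx \<Longrightarrow> continuous_on {0..1} \<psi>"
  unfolding PC21_def Ck_on_def Ck_chain_def by auto

lemma psi_lip:
  assumes pc: "PC21 \<psi> \<psi>x \<psi>xx" "s \<in> {0..1}" "s' \<in> {0..1}"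
  shows "\<bar>\<psi> s - \<psi> s'\<bar> \<le> PC21_norm \<psi> \<psi>xx * \<bar>s - s'\<bar>"
proof -
  have "norm (\<psi> s - \<psi> s') \<le> PC21_norm \<psi> \<psi>xx * norm (s - s')"
    apply (rule field_differentiable_bound[of "{0..1::real}" \<psi> \<psi>x])
    using PC21_der[OF pc(1)] PC21_facts(5)[OF pc(1)] pc(2,3) by auto
  then show ?thesis by simp
qed

lemma R_bound:
  assumes pc: "PC21 \<psi> \<psi>x \<psi>xx" and Kp: "0 \<le> Kp"
    "\<forall>x\<in>{0..1}. (\<forall>s\<in>{0..1}. \<bar>\<phi> x s\<bar> \<le> Kp) \<and> (\<forall>s\<in>{0..1}. \<forall>s'\<in>{0..1}. \<bar>\<phi> x s - \<phi> x s'\<bar> \<le> Kp * \<bar>s - s'\<bar>)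
        \<and> continuous_on {0..1} (\<phi> x)"
    and h: "h > 0" and i: "real i * h \<le> 1"
  shows "\<bar>integral {0..real i * h} (\<lambda>s. \<phi> (real i * h) s * \<psi> s)
           - h * (\<Sum>m=1..i. \<phi> (real i * h) (real m * h) * \<psi> (real m * h))\<bar> \<le> 2 * (Kp * PC21_norm \<psi> \<psi>xx) * h"
proof -
  let ?M = "PC21_norm \<psi> \<psi>xx"
  let ?x = "real i * h"
  have x01: "?x \<in> {0..1}" using i h by auto
  have M0: "0 \<le> ?M" using PC21_facts(3)[OF pc] .
  have phb: "\<forall>s\<in>{0..1}. \<bar>\<phi> ?x s\<bar> \<le> Kp" and phl: "\<forall>s\<in>{0..1}. \<forall>s'\<in>{0..1}. \<bar>\<phi> ?x s - \<phi> ?x s'\<bar> \<le> Kp * \<bar>s - s'\<bar>"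
    and phc: "continuous_on {0..1} (\<phi> ?x)" using Kp(2) x01 by auto
  have psb: "\<forall>s\<in>{0..1}. \<bar>\<psi> s\<bar> \<le> ?M" using PC21_facts(4)[OF pc] .
  let ?g = "\<lambda>s. \<phi> ?x s * \<psi> s"
  have gc: "continuous_on {0..1} ?g" using phc psi_cont[OF pc] by (intro continuous_intros)
  have gl: "\<forall>s\<in>{0..1}. \<forall>s'\<in>{0..1}. \<bar>?g s - ?g s'\<bar> \<le> (2 * (Kp * ?M)) * \<bar>s - s'\<bar>"
  proof (intro ballI)
    fix s s' :: real assume s: "s \<in> {0..1}" "s' \<in> {0..1}"
    have e: "?g s - ?g s' = \<phi> ?x s * (\<psi> s - \<psi> s') + \<psi> s' * (\<phi> ?x s - \<phi> ?x s')" by (simp add: algebra_simps)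
    have t1: "\<bar>\<phi> ?x s * (\<psi> s - \<psi> s')\<bar> \<le> Kp * (?M * \<bar>s - s'\<bar>)"
      unfolding abs_mult by (rule mult_mono) (use phb psi_lip[OF pc s] s Kp in auto)
    have t2: "\<bar>\<psi> s' * (\<phi> ?x s - \<phi> ?x s')\<bar> \<le> ?M * (Kp * \<bar>s - s'\<bar>)"
      unfolding abs_mult by (rule mult_mono) (use psb phl s M0 in auto)
    have "\<bar>?g s - ?g s'\<bar> \<le> Kp * (?M * \<bar>s - s'\<bar>) + ?M * (Kp * \<bar>s - s'\<bar>)"
      unfolding e by (rule tri_add[OF t1 t2])
    also have "\<dots> = (2 * (Kp * ?M)) * \<bar>s - s'\<bar>" by (simp add: algebra_simps)
    finally show "\<bar>?g s - ?g s'\<bar> \<le> (2 * (Kp * ?M)) * \<bar>s - s'\<bar>" .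
  qed
  have L0: "0 \<le> 2 * (Kp * ?M)" using Kp M0 by simp
  have "\<bar>integral {0..?x} ?g - h * (\<Sum>m=1..i. ?g (real m * h))\<bar> \<le> (2 * (Kp * ?M)) * h * ?x"
    by (rule riemann_err[OF gc gl L0 h i])
  also have "\<dots> \<le> (2 * (Kp * ?M)) * h * 1"
    by (rule mult_left_mono) (use i L0 h in auto)
  finally show ?thesis by simp
qed

lemma E_bound:
  fixes t s A B R Kc :: real
  assumes "\<bar>t\<bar> \<le> Kc" "\<bar>s\<bar> \<le> Kc"
  shows "\<bar>t * A + s * B + R\<bar> \<le> Kc * \<bar>A\<bar> + Kc * \<bar>B\<bar> + \<bar>R\<bar>"
proof -
  have "\<bar>t * A\<bar> \<le> Kc * \<bar>A\<bar>" unfolding abs_mult by (rule mult_right_mono) (use assms in auto)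
  moreover have "\<bar>s * B\<bar> \<le> Kc * \<bar>B\<bar>" unfolding abs_mult by (rule mult_right_mono) (use assms in auto)
  ultimately show ?thesis by (smt (verit) abs_triangle_ineq)
qed

lemma comb:
  fixes E A B R a b r Kc :: real
  assumes "\<bar>E\<bar> \<le> Kc * \<bar>A\<bar> + Kc * \<bar>B\<bar> + \<bar>R\<bar>" "\<bar>A\<bar> \<le> a" "\<bar>B\<bar> \<le> b" "\<bar>R\<bar> \<le> r" "0 \<le> Kc"
  shows "\<bar>E\<bar> \<le> Kc * a + Kc * b + r"
proof -
  have "Kc * \<bar>A\<bar> \<le> Kc * a" "Kc * \<bar>B\<bar> \<le> Kc * b" using assms by (auto intro: mult_left_mono)
  then show ?thesis using assms by linarith
qed

lemma per_t:
  fixes \<theta> \<sigma> lam \<psi> \<psi>x \<psi>xx :: "real \<Rightarrow> real" and \<phi> :: "real \<Rightarrow> real \<Rightarrow> real"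
    and \<alpha>0 \<beta>0 \<alpha>1 \<beta>1 Kc Kp :: real and n :: nat and I :: "real set"
  assumes pc: "PC21 \<psi> \<psi>x \<psi>xx"
    and bc: "\<alpha>0 * \<psi>x 0 + \<beta>0 * \<psi> 0 = 0"
    and nd: "{x\<in>{0..1}. \<not> \<psi>xx differentiable (at x within {0..1})} \<subseteq> I"
    and finI: "finite I"
    and Kc: "\<forall>x\<in>{0..1}. \<bar>\<theta> x\<bar> \<le> Kc \<and> \<bar>\<sigma> x\<bar> \<le> Kc" "0 \<le> Kc"
    and Kp: "0 \<le> Kp"
    "\<forall>x\<in>{0..1}. (\<forall>s\<in>{0..1}. \<bar>\<phi> x s\<bar> \<le> Kp) \<and> (\<forall>s\<in>{0..1}. \<forall>s'\<in>{0..1}. \<bar>\<phi> x s - \<phi> x s'\<bar> \<le> Kp * \<bar>s - s'\<bar>)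
        \<and> continuous_on {0..1} (\<phi> x)"
    and n: "3 \<le> n"
    and c0: "\<alpha>0 = 0 \<or> hstep n * \<bar>\<beta>0\<bar> \<le> \<bar>\<alpha>0\<bar> / 2"
    and c1: "\<alpha>1 = 0 \<or> hstep n * \<bar>\<beta>1\<bar> \<le> \<bar>\<alpha>1\<bar> / 2"
    and nz: "3 * \<alpha>0 - 2 * hstep n * \<beta>0 \<noteq> 0" "3 * \<alpha>1 + 2 * hstep n * \<beta>1 \<noteq> 0" "\<alpha>0 - hstep n * \<beta>0 \<noteq> 0"
  shows "norm2d n (\<lambda>i. Rn n (Pop \<theta> \<sigma> lam \<phi> \<psi> \<psi>x \<psi>xx) i
             - matvec n (Pmat \<theta> \<sigma> lam \<phi> \<alpha>0 \<beta>0 \<alpha>1 \<beta>1 n) (Rn n \<psi>) i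
             - Bvec \<theta> \<alpha>1 \<beta>1 n i * (\<alpha>1 * \<psi>x 1 + \<beta>1 * \<psi> 1))
     \<le> sqrt ((3 * Kc + 2 * Kp)\<^sup>2 + real (2 + 3 * card I) * ((12 + (3 + 2 * \<bar>\<beta>0\<bar> / \<bar>\<alpha>0\<bar>)) * Kc + 2 * Kp)\<^sup>2)
        * sqrt (hstep n) * PC21_norm \<psi> \<psi>xx"
proof -
  define h where "h = hstep n"
  define M where "M = PC21_norm \<psi> \<psi>xx"
  define Q0 where "Q0 = 3 + 2 * \<bar>\<beta>0\<bar> / \<bar>\<alpha>0\<bar>"
  define f where "f = \<alpha>1 * \<psi>x 1 + \<beta>1 * \<psi> 1"
  define E where "E i = Rn n (Pop \<theta> \<sigma> lam \<phi> \<psi> \<psi>x \<psi>xx) i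
             - matvec n (Pmat \<theta> \<sigma> lam \<phi> \<alpha>0 \<beta>0 \<alpha>1 \<beta>1 n) (Rn n \<psi>) i
             - Bvec \<theta> \<alpha>1 \<beta>1 n i * (\<alpha>1 * \<psi>x 1 + \<beta>1 * \<psi> 1)" for i
  define C1 where "C1 = 3 * Kc + 2 * Kp"
  define C2 where "C2 = (12 + Q0) * Kc + 2 * Kp"
  define NG where "NG = {i\<in>{1..n}. i = 1 \<or> i = n \<or> (\<exists>c\<in>I. \<bar>real i * h - c\<bar> \<le> h)}"
  have h0: "h > 0" unfolding h_def hstep_def by simp
  have hn: "real n * h + h = 1" unfolding h_def hstep_def by (simp add: field_simps)
  have h4: "4 * h \<le> 1" unfolding h_def hstep_def using n by (simp add: field_simps)
  have h1: "h \<le> 1" using h4 h0 by simp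
  have nh2: "real n * h\<^sup>2 \<le> 1"
  proof -
    have "real n * h\<^sup>2 = (real n * h) * h" by (simp add: power2_eq_square)
    also have "\<dots> \<le> 1 * 1" by (rule mult_mono) (use hn h0 h1 in auto)
    finally show ?thesis by simp
  qed
  have M0: "0 \<le> M" unfolding M_def using PC21_facts(3)[OF pc] .
  have Q00: "0 \<le> Q0" unfolding Q0_def by simp
  have xle: "real i * h \<le> 1 - h" if "i \<le> n" for i
  proof -
    have "real i * h \<le> real n * h" using that h0 by (intro mult_right_mono) auto
    then show ?thesis using hn by linarith
  qed
  have x01: "real i * h \<in> {0..1}" if "i \<le> n" for i
    using xle[OF that] h0 by simp
  have Ksc: "\<bar>\<theta> (real i * h)\<bar> \<le> Kc" "\<bar>\<sigma> (real i * h)\<bar> \<le> Kc" if "i \<in> {1..n}" for i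
  proof -
    have "real i * h \<in> {0..1}" using x01 that by simp
    then show "\<bar>\<theta> (real i * h)\<bar> \<le> Kc" "\<bar>\<sigma> (real i * h)\<bar> \<le> Kc" using Kc by blast+
  qed
  define SM where "SM i = (\<Sum>j=1..n. Mmat \<alpha>0 \<beta>0 \<alpha>1 \<beta>1 n i j * Rn n \<psi> j)" for i
  define SN where "SN i = (\<Sum>j=1..n. Nmat \<alpha>0 \<beta>0 n i j * Rn n \<psi> j)" for i
  define R where "R i = integral {0..real i * h} (\<lambda>s. \<phi> (real i * h) s * \<psi> s)
           - h * (\<Sum>m=1..i. \<phi> (real i * h) (real m * h) * \<psi> (real m * h))" for i
  have decomp: "E i = \<theta> (real i * h) * (\<psi>xx (real i * h) - SM i / h\<^sup>2)
       + \<sigma> (real i * h) * (\<psi>x (real i * h) - SN i / h) + R i - Bvec \<theta> \<alpha>1 \<beta>1 n i * f"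
    if i: "i \<in> {1..n}" for i
  proof -
    have mv: "matvec n (Pmat \<theta> \<sigma> lam \<phi> \<alpha>0 \<beta>0 \<alpha>1 \<beta>1 n) (Rn n \<psi>) i
      = \<theta> (real i * h) * SM i / h\<^sup>2 + \<sigma> (real i * h) * SN i / h + lam (real i * h) * \<psi> (real i * h)
        + h * (\<Sum>m=1..i. \<phi> (real i * h) (real m * h) * \<psi> (real m * h))"
      using matvec_P[of i n \<theta> \<sigma> lam \<phi> \<alpha>0 \<beta>0 \<alpha>1 \<beta>1 "Rn n \<psi>"] i
      unfolding SM_def SN_def h_def by (simp add: Rn_def)
    show ?thesis unfolding E_def mv f_def R_def by (simp add: Rn_def Pop_def h_def algebra_simps)
  qed
  define D1 where "D1 = 3 * \<alpha>1 + 2 * h * \<beta>1"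
  define A where "A i = \<psi>xx (real i * h) - SM i / h\<^sup>2 - (if i = n then 2 * h * f / D1 / h\<^sup>2 else 0)" for i
  define B where "B i = \<psi>x (real i * h) - SN i / h" for i
  have EAB: "E i = \<theta> (real i * h) * A i + \<sigma> (real i * h) * B i + R i" if i: "i \<in> {1..n}" for i
  proof (cases "i = n")
    case True
    have "Bvec \<theta> \<alpha>1 \<beta>1 n i * f = \<theta> (real i * h) * (2 * h * f / D1 / h\<^sup>2)"
      using True unfolding Bvec_def bn_def h_def D1_def by simp
    then show ?thesis unfolding decomp[OF i] A_def B_def using True by (simp add: algebra_simps)
  next
    case False
    then show ?thesis unfolding decomp[OF i] A_def B_def by (simp add: Bvec_def algebra_simps)
  qed
  have Eb: "\<bar>E i\<bar> \<le> Kc * \<bar>A i\<bar> + Kc * \<bar>B i\<bar> + \<bar>R i\<bar>" if i: "i \<in> {1..n}" for i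
    unfolding EAB[OF i] by (rule E_bound[OF Ksc[OF i]])
  have Rb: "\<bar>R i\<bar> \<le> 2 * (Kp * M) * h" if i: "i \<in> {1..n}" for i
    unfolding R_def M_def by (rule R_bound[OF pc Kp h0]) (use x01 i in auto)
  have v0: "Rn n \<psi> i = \<psi> (real i * h)" for i by (simp add: Rn_def h_def)
  have vm: "Rn n \<psi> (i - 1) = \<psi> (real i * h - h)" if "1 \<le> i" for i
    using that by (simp add: Rn_def h_def of_nat_diff algebra_simps)
  have vp: "Rn n \<psi> (i + 1) = \<psi> (real i * h + h)" for i
    by (simp add: Rn_def h_def algebra_simps)
  have Bmid: "\<bar>B i\<bar> \<le> M * h" if i: "2 \<le> i" "i \<le> n" for i
  proof -
    have "SN i = \<psi> (real i * h) - \<psi> (real i * h - h)" unfolding SN_def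
      using N_ge2[OF i, of \<alpha>0 \<beta>0 "Rn n \<psi>"] vm[of i] v0[of i] i by simp
    then have "B i = \<psi>x (real i * h) - (\<psi> (real i * h) - \<psi> (real i * h - h)) / h" unfolding B_def by simp
    also have "\<bar>\<dots>\<bar> \<le> M * h" unfolding M_def
    proof (rule bd_diff[OF pc h0])
      show "0 \<le> real i * h - h" using i h0 by (simp add: algebra_simps)
      show "real i * h \<le> 1" using x01 i by auto
    qed
    finally show ?thesis .
  qed
  have Amid: "\<bar>A i\<bar> \<le> 3 * M" if i: "2 \<le> i" "i + 1 \<le> n" for i
  proof -
    have "SM i = \<psi> (real i * h - h) - 2 * \<psi> (real i * h) + \<psi> (real i * h + h)" unfolding SM_def
      using M_mid[OF i, of \<alpha>0 \<beta>0 \<alpha>1 \<beta>1 "Rn n \<psi>"] vm[of i] v0[of i] vp[of i] i by simp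
    then have Ai: "A i = \<psi>xx (real i * h) - (\<psi> (real i * h - h) - 2 * \<psi> (real i * h) + \<psi> (real i * h + h)) / h\<^sup>2"
      unfolding A_def using i by simp
    have lo: "0 \<le> real i * h - h" using i h0 by (simp add: algebra_simps)
    have hi: "real i * h + h \<le> 1" using xle[of "i+1"] i h0 by (simp add: algebra_simps)
    have "\<bar>\<psi> (real i * h - h) - 2 * \<psi> (real i * h) + \<psi> (real i * h + h)\<bar> \<le> 2 * M * h\<^sup>2"
      unfolding M_def by (rule sd_any[OF pc h0 lo hi])
    then have q: "\<bar>(\<psi> (real i * h - h) - 2 * \<psi> (real i * h) + \<psi> (real i * h + h)) / h\<^sup>2\<bar> \<le> 2 * M"
      using h0 by (simp add: abs_divide divide_le_eq)
    have "\<bar>\<psi>xx (real i * h)\<bar> \<le> M" unfolding M_def using PC21_facts(6)[OF pc] x01[of i] i by auto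
    then have "\<bar>A i\<bar> \<le> M + 2 * M" unfolding Ai by (rule tri_diff[OF _ q])
    then show ?thesis by simp
  qed
  have Agen: "\<bar>A i\<bar> \<le> 2 * M * h" if i: "2 \<le> i" "i + 1 \<le> n" and nI: "\<forall>c\<in>I. \<not> \<bar>real i * h - c\<bar> \<le> h" for i
  proof -
    have "SM i = \<psi> (real i * h - h) - 2 * \<psi> (real i * h) + \<psi> (real i * h + h)" unfolding SM_def
      using M_mid[OF i, of \<alpha>0 \<beta>0 \<alpha>1 \<beta>1 "Rn n \<psi>"] vm[of i] v0[of i] vp[of i] i by simp
    then have Ai: "A i = \<psi>xx (real i * h) - (\<psi> (real i * h - h) - 2 * \<psi> (real i * h) + \<psi> (real i * h + h)) / h\<^sup>2"
      unfolding A_def using i by simp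
    have lo: "0 \<le> real i * h - h" using i h0 by (simp add: algebra_simps)
    have hi: "real i * h + h \<le> 1" using xle[of "i+1"] i h0 by (simp add: algebra_simps)
    have diff: "\<forall>u\<in>{real i * h - h..real i * h + h}. \<psi>xx differentiable (at u within {0..1})"
    proof
      fix u assume u: "u \<in> {real i * h - h..real i * h + h}"
      then have "u \<notin> I" using nI by (auto simp: abs_le_iff)
      moreover have "u \<in> {0..1}" using u lo hi by auto
      ultimately show "\<psi>xx differentiable (at u within {0..1})" using nd by blast
    qed
    have "\<bar>\<psi> (real i * h - h) - 2 * \<psi> (real i * h) + \<psi> (real i * h + h) - h\<^sup>2 * \<psi>xx (real i * h)\<bar> \<le> 2 * M * h ^ 3"
      unfolding M_def by (rule sd_gen[OF pc h0 lo hi diff])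
    moreover have "A i = - ((\<psi> (real i * h - h) - 2 * \<psi> (real i * h) + \<psi> (real i * h + h) - h\<^sup>2 * \<psi>xx (real i * h)) / h\<^sup>2)"
      unfolding Ai using h0 by (simp add: field_simps)
    ultimately show ?thesis using h0 by (simp add: abs_divide divide_le_eq power2_eq_square power3_eq_cube algebra_simps)
  qed
  have aD0: "\<bar>\<alpha>0\<bar> \<le> \<bar>3 * \<alpha>0 - 2 * h * \<beta>0\<bar>"
  proof (cases "\<alpha>0 = 0")
    case False
    then have "h * \<bar>\<beta>0\<bar> \<le> \<bar>\<alpha>0\<bar> / 2" using c0 unfolding h_def by auto
    then have "\<bar>2 * h * \<beta>0\<bar> \<le> \<bar>\<alpha>0\<bar>" using h0 by (simp add: abs_mult)
    then show ?thesis using abs_triangle_ineq2[of "3 * \<alpha>0" "2 * h * \<beta>0"] by simp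
  qed simp
  have aD1: "\<bar>\<alpha>1\<bar> \<le> \<bar>3 * \<alpha>1 + 2 * h * \<beta>1\<bar>"
  proof (cases "\<alpha>1 = 0")
    case False
    then have "h * \<bar>\<beta>1\<bar> \<le> \<bar>\<alpha>1\<bar> / 2" using c1 unfolding h_def by auto
    then have "\<bar>2 * h * \<beta>1\<bar> \<le> \<bar>\<alpha>1\<bar>" using h0 by (simp add: abs_mult)
    then show ?thesis using abs_triangle_ineq2[of "3 * \<alpha>1" "- (2 * h * \<beta>1)"] by simp
  qed simp
  have n1: "1 \<noteq> n" using n by simp
  have A1: "\<bar>A 1\<bar> \<le> 11 * M"
  proof -
    have "SM 1 = (4 * (\<alpha>0 / (3 * \<alpha>0 - 2 * h * \<beta>0)) - 2) * \<psi> h + (1 - \<alpha>0 / (3 * \<alpha>0 - 2 * h * \<beta>0)) * \<psi> (2 * h)"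
      unfolding SM_def using M_1[of n \<alpha>0 \<beta>0 \<alpha>1 \<beta>1 "Rn n \<psi>"] n by (simp add: Rn_def r0_def h_def)
    then have "A 1 = \<psi>xx h - ((4 * (\<alpha>0 / (3 * \<alpha>0 - 2 * h * \<beta>0)) - 2) * \<psi> h + (1 - \<alpha>0 / (3 * \<alpha>0 - 2 * h * \<beta>0)) * \<psi> (2 * h)) / h\<^sup>2"
      unfolding A_def using n1 by simp
    also have "\<bar>\<dots>\<bar> \<le> 11 * M" unfolding M_def
      by (rule row1_A[OF pc bc _ aD0 h0]) (use nz h4 in \<open>auto simp: h_def\<close>)
    finally show ?thesis .
  qed
  have B1: "\<bar>B 1\<bar> \<le> Q0 * M"
  proof -
    have "SN 1 = h * (- \<beta>0 / (\<alpha>0 - h * \<beta>0)) * \<psi> h"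
      unfolding SN_def using N_1[of n \<alpha>0 \<beta>0 "Rn n \<psi>"] n by (simp add: Rn_def q0_def h_def)
    then have "B 1 = \<psi>x h - (- \<beta>0 / (\<alpha>0 - h * \<beta>0)) * \<psi> h" unfolding B_def using h0 by simp
    also have "\<bar>\<dots>\<bar> \<le> Q0 * M" unfolding M_def Q0_def
      by (rule row1_B[OF pc bc]) (use nz c0 h0 h1 in \<open>auto simp: h_def\<close>)
    finally show ?thesis .
  qed
  have xn: "real n * h = 1 - h" using hn by simp
  have An: "\<bar>A n\<bar> \<le> 11 * M"
  proof -
    have SMn: "SM n = (4 * (\<alpha>1 / D1) - 2) * \<psi> (1 - h) + (1 - \<alpha>1 / D1) * \<psi> (1 - h - h)"
      unfolding SM_def using M_n[OF n, of \<alpha>0 \<beta>0 \<alpha>1 \<beta>1 "Rn n \<psi>"] vm[of n] v0[of n] n xn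
      by (simp add: r1_def D1_def h_def)
    have e: "SM n + 2 * h * f / D1 = (1 - \<alpha>1 / D1) * \<psi> (1 - h - h) + (4 * (\<alpha>1 / D1) - 2) * \<psi> (1 - h) + 2 * h * f / D1"
      unfolding SMn by simp
    have "A n = \<psi>xx (1 - h) - (SM n + 2 * h * f / D1) / h\<^sup>2"
      unfolding A_def using xn by (simp add: add_divide_distrib)
    also have "\<dots> = \<psi>xx (1 - h) - ((1 - \<alpha>1 / D1) * \<psi> (1 - h - h) + (4 * (\<alpha>1 / D1) - 2) * \<psi> (1 - h) + 2 * h * f / D1) / h\<^sup>2"
      unfolding e ..
    also have "\<bar>\<dots>\<bar> \<le> 11 * M" unfolding M_def D1_def f_def
      by (rule rown_A[OF pc _ aD1 h0 _ refl]) (use nz h4 in \<open>auto simp: h_def\<close>)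
    finally show ?thesis .
  qed
  have KM: "0 \<le> Kc * M" "0 \<le> Kp * M" using Kc(2) Kp(1) M0 by auto
  have hle: "Kc * M * h \<le> Kc * M" "Kp * M * h \<le> Kp * M" using KM h1 by (auto intro: mult_left_le)
  have QKM: "0 \<le> Q0 * (Kc * M)" using Q00 KM by simp
  have C2M: "C2 * M = 12 * (Kc * M) + Q0 * (Kc * M) + 2 * (Kp * M)" unfolding C2_def by (simp add: algebra_simps)
  have allb: "\<forall>i\<in>{1..n}. \<bar>E i\<bar> \<le> C2 * M"
  proof
    fix i assume i: "i \<in> {1..n}"
    consider "i = 1" | "i = n" | "2 \<le> i \<and> i + 1 \<le> n" using i n by force
    then show "\<bar>E i\<bar> \<le> C2 * M"
    proof cases
      case 1
      have "\<bar>E i\<bar> \<le> Kc * (11 * M) + Kc * (Q0 * M) + 2 * (Kp * M) * h"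
        by (rule comb[OF Eb[OF i]]) (use 1 A1 B1 Rb[OF i] Kc(2) in auto)
      moreover have "Kc * (11 * M) + Kc * (Q0 * M) + 2 * (Kp * M) * h = 11 * (Kc * M) + Q0 * (Kc * M) + 2 * (Kp * M * h)"
        by (simp add: algebra_simps)
      ultimately show ?thesis using C2M hle KM QKM by linarith
    next
      case 2
      have "\<bar>E i\<bar> \<le> Kc * (11 * M) + Kc * (M * h) + 2 * (Kp * M) * h"
        by (rule comb[OF Eb[OF i]]) (use 2 An Bmid[of n] n Rb[OF i] Kc(2) in auto)
      moreover have "Kc * (11 * M) + Kc * (M * h) + 2 * (Kp * M) * h = 11 * (Kc * M) + Kc * M * h + 2 * (Kp * M * h)"
        by (simp add: algebra_simps)
      ultimately show ?thesis using C2M hle KM QKM by linarith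
    next
      case 3
      have "\<bar>E i\<bar> \<le> Kc * (3 * M) + Kc * (M * h) + 2 * (Kp * M) * h"
        by (rule comb[OF Eb[OF i]]) (use 3 Amid Bmid Rb[OF i] Kc(2) in auto)
      moreover have "Kc * (3 * M) + Kc * (M * h) + 2 * (Kp * M) * h = 3 * (Kc * M) + Kc * M * h + 2 * (Kp * M * h)"
        by (simp add: algebra_simps)
      ultimately show ?thesis using C2M hle KM QKM by linarith
    qed
  qed
  have genb: "\<forall>i\<in>{1..n} - NG. \<bar>E i\<bar> \<le> C1 * M * h"
  proof
    fix i assume i: "i \<in> {1..n} - NG"
    then have i1: "i \<in> {1..n}" and ii: "2 \<le> i" "i + 1 \<le> n" and nI: "\<forall>c\<in>I. \<not> \<bar>real i * h - c\<bar> \<le> h"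
      unfolding NG_def by auto
    have "\<bar>E i\<bar> \<le> Kc * (2 * M * h) + Kc * (M * h) + 2 * (Kp * M) * h"
      by (rule comb[OF Eb[OF i1]]) (use Agen[OF ii nI] Bmid[of i] ii Rb[OF i1] Kc(2) in auto)
    also have "\<dots> = C1 * M * h" unfolding C1_def by (simp add: algebra_simps)
    finally show "\<bar>E i\<bar> \<le> C1 * M * h" .
  qed
  have NGs: "NG \<subseteq> {1..n}" unfolding NG_def by auto
  have NGc: "card NG \<le> 2 + 3 * card I" unfolding NG_def by (rule card_NG[OF finI h0])
  have C10: "0 \<le> C1" "0 \<le> C2" unfolding C1_def C2_def using Kc(2) Kp(1) Q00 by auto
  have bnd: "sqrt h * sqrt (\<Sum>i=1..n. (E i)\<^sup>2) \<le> sqrt (C1\<^sup>2 + real (2 + 3 * card I) * C2\<^sup>2) * sqrt h * M"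
    by (rule sum_bound[OF allb genb NGs NGc C10 M0 h0 nh2])
  have eqE: "(\<lambda>i. Rn n (Pop \<theta> \<sigma> lam \<phi> \<psi> \<psi>x \<psi>xx) i
             - matvec n (Pmat \<theta> \<sigma> lam \<phi> \<alpha>0 \<beta>0 \<alpha>1 \<beta>1 n) (Rn n \<psi>) i
             - Bvec \<theta> \<alpha>1 \<beta>1 n i * (\<alpha>1 * \<psi>x 1 + \<beta>1 * \<psi> 1)) = E"
    unfolding E_def ..
  show ?thesis unfolding eqE using bnd unfolding norm2d_def h_def M_def C1_def C2_def Q0_def by simp
qed


lemma arith4: "(a::real) \<le> b + c \<Longrightarrow> d \<le> 2*(e + f) \<Longrightarrow> 0 \<le> b \<Longrightarrow> 0 \<le> c \<Longrightarrow> a + d \<le> 2*(b + e) + 2*(c + f)"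
  by (smt (verit))

lemma quasi21:
  assumes u: "PC21 u ux uxx" and w: "PC21 w wx wxx"
  shows "PC21_norm w wxx \<le> 2 * PC21_norm u uxx + 2 * PC21_norm (\<lambda>x. w x - u x) (\<lambda>x. wxx x - uxx x)"
proof -
  have cu: "Ck_on 1 u {0..1}" and cw: "Ck_on 1 w {0..1}" using u w unfolding PC21_def by auto
  obtain Du where Du: "Ck_chain 1 u {0..1} Du" using cu Ck_on_def by blast
  obtain Dw where Dw: "Ck_chain 1 w {0..1} Dw" using cw Ck_on_def by blast
  have "Ck_chain 1 (\<lambda>x. w x + (-1) * u x) {0..1} (\<lambda>j x. Dw j x + (-1) * Du j x)" by (rule chain_lin[OF Dw Du])
  then have cd: "Ck_on 1 (\<lambda>x. w x - u x) {0..1}" unfolding Ck_on_def by auto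
  have "Ck_norm 1 (\<lambda>x. u x + (w x - u x)) {0..1} \<le> Ck_norm 1 u {0..1} + Ck_norm 1 (\<lambda>x. w x - u x) {0..1}"
    by (rule Ck_norm_tri[OF cu cd]) simp
  then have t1: "Ck_norm 1 w {0..1} \<le> Ck_norm 1 u {0..1} + Ck_norm 1 (\<lambda>x. w x - u x) {0..1}" by simp
  obtain F1 B1 K1 where d1: "PCdata uxx F1 B1 K1" using PCk_to_data u unfolding PC21_def by blast
  obtain F2 B2 K2 where d2: "PCdata wxx F2 B2 K2" using PCk_to_data w unfolding PC21_def by blast
  have t2: "PCk_norm 1 wxx \<le> 2 * (PCk_norm 1 uxx + PCk_norm 1 (\<lambda>x. wxx x - uxx x))"
    by (rule PCk_quasi_tri[OF d1 d2])
  have n1: "0 \<le> Ck_norm 1 u {0..1}" using Ck_norm_nonneg[OF cu] by simp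
  have n2: "0 \<le> Ck_norm 1 (\<lambda>x. w x - u x) {0..1}" using Ck_norm_nonneg[OF cd] by simp
  show ?thesis unfolding PC21_norm_def by (rule arith4[OF t1 t2 n1 n2])
qed

lemma time_bdd:
  fixes \<xi> \<xi>x \<xi>xx :: "real \<Rightarrow> real \<Rightarrow> real"
  assumes pcs: "\<forall>t\<in>{\<rho>..T}. PC21 (\<xi> t) (\<xi>x t) (\<xi>xx t)"
    and cont: "\<forall>s\<in>{\<rho>..T}. ((\<lambda>t. PC21_norm (\<lambda>x. \<xi> t x - \<xi> s x) (\<lambda>x. \<xi>xx t x - \<xi>xx s x)) \<longlongrightarrow> 0)
                        (at s within {\<rho>..T})"
  shows "bdd_above ((\<lambda>t. PC21_norm (\<xi> t) (\<xi>xx t)) ` {\<rho>..T})"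
proof -
  let ?N = "\<lambda>t. PC21_norm (\<xi> t) (\<xi>xx t)"
  have loc: "\<exists>d>0. \<forall>t\<in>{\<rho>..T}. dist t s < d \<longrightarrow> ?N t \<le> 2 * ?N s + 2" if s: "s \<in> {\<rho>..T}" for s
  proof -
    have "\<forall>\<^sub>F t in at s within {\<rho>..T}. PC21_norm (\<lambda>x. \<xi> t x - \<xi> s x) (\<lambda>x. \<xi>xx t x - \<xi>xx s x) < 1"
      by (rule order_tendstoD(2)[OF cont[rule_format, OF s]]) simp
    then obtain d where d: "d > 0" "\<And>t. t \<in> {\<rho>..T} \<Longrightarrow> t \<noteq> s \<Longrightarrow> dist t s < d \<Longrightarrow>
        PC21_norm (\<lambda>x. \<xi> t x - \<xi> s x) (\<lambda>x. \<xi>xx t x - \<xi>xx s x) < 1"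
      unfolding eventually_at by blast
    have ns: "0 \<le> ?N s" using PC21_facts(3) pcs s by blast
    have "?N t \<le> 2 * ?N s + 2" if t: "t \<in> {\<rho>..T}" "dist t s < d" for t
    proof (cases "t = s")
      case True then show ?thesis using ns by simp
    next
      case False
      have "?N t \<le> 2 * ?N s + 2 * PC21_norm (\<lambda>x. \<xi> t x - \<xi> s x) (\<lambda>x. \<xi>xx t x - \<xi>xx s x)"
        by (rule quasi21) (use pcs s t in auto)
      then show ?thesis using d(2)[OF t(1) False t(2)] by linarith
    qed
    then show ?thesis using d(1) by blast
  qed
  have "\<forall>s\<in>{\<rho>..T}. \<exists>dk. fst dk > 0 \<and> (\<forall>t\<in>{\<rho>..T}. dist t s < fst dk \<longrightarrow> ?N t \<le> snd dk)"
    using loc by (metis fst_conv snd_conv)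
  then obtain dk where dk: "\<And>s. s \<in> {\<rho>..T} \<Longrightarrow> fst (dk s) > 0 \<and> (\<forall>t\<in>{\<rho>..T}. dist t s < fst (dk s) \<longrightarrow> ?N t \<le> snd (dk s))"
    by metis
  have "{\<rho>..T} \<subseteq> (\<Union>s\<in>{\<rho>..T}. ball s (fst (dk s)))" using dk by force
  then obtain C where C: "C \<subseteq> {\<rho>..T}" "finite C" "{\<rho>..T} \<subseteq> (\<Union>s\<in>C. ball s (fst (dk s)))"
    using compactE_image[of "{\<rho>..T}" "{\<rho>..T}" "\<lambda>s. ball s (fst (dk s))"] by auto
  obtain K where K: "K \<ge> 0" "\<forall>s\<in>C. snd (dk s) \<le> K" using sum_bound_finite[OF C(2), of "\<lambda>s. snd (dk s)"] by blast
  show ?thesis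
  proof (rule bdd_aboveI[where M=K])
    fix y assume "y \<in> ?N ` {\<rho>..T}"
    then obtain t where t: "t \<in> {\<rho>..T}" "y = ?N t" by blast
    then obtain s where s: "s \<in> C" "t \<in> ball s (fst (dk s))" using C(3) by blast
    have "dist t s < fst (dk s)" using s(2) by (simp add: dist_commute)
    then have "?N t \<le> snd (dk s)" using dk[of s] s(1) C(1) t(1) by blast
    then show "y \<le> K" using K s(1) t(2) by force
  qed
qed


theorem lemma2:
  fixes \<theta> \<sigma> lam :: "real \<Rightarrow> real" and \<phi> :: "real \<Rightarrow> real \<Rightarrow> real"
    and \<alpha>0 \<beta>0 \<alpha>1 \<beta>1 T \<rho> :: real
  assumes "PCk 1 \<theta>" and "PCk 1 \<sigma>" and "PCk 1 lam"
    and "(INF x\<in>{0..1}. \<theta> x) > 0"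
    and "kernel_C1C1 \<phi>"
    and "\<forall>n\<ge>1. 3 * \<alpha>0 - 2 * hstep n * \<beta>0 \<noteq> 0 \<and> 3 * \<alpha>1 + 2 * hstep n * \<beta>1 \<noteq> 0
                 \<and> \<alpha>0 - hstep n * \<beta>0 \<noteq> 0"
    and "T > 0" and "0 \<le> \<rho>" and "\<rho> < T"
  shows "\<exists>C>0. \<forall>(\<xi>::real \<Rightarrow> real \<Rightarrow> real) (\<xi>x::real \<Rightarrow> real \<Rightarrow> real) (\<xi>xx::real \<Rightarrow> real \<Rightarrow> real).
     (\<forall>t\<in>{\<rho>..T}. PC21 (\<xi> t) (\<xi>x t) (\<xi>xx t))
     \<and> (\<forall>s\<in>{\<rho>..T}. ((\<lambda>t. PC21_norm (\<lambda>x. \<xi> t x - \<xi> s x) (\<lambda>x. \<xi>xx t x - \<xi>xx s x)) \<longlongrightarrow> 0)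
                        (at s within {\<rho>..T}))
     \<and> (\<forall>t\<in>{\<rho>..T}. \<alpha>0 * \<xi>x t 0 + \<beta>0 * \<xi> t 0 = 0)
     \<and> (\<forall>t\<in>{\<rho>..T}. {x\<in>{0..1}. \<not> \<xi>xx t differentiable (at x within {0..1})} \<subseteq> Iset \<theta> \<sigma> lam)
     \<longrightarrow> (\<exists>N. \<forall>n\<ge>N.
          (SUP t\<in>{\<rho>..T}. norm2d n (\<lambda>i.
               Rn n (Pop \<theta> \<sigma> lam \<phi> (\<xi> t) (\<xi>x t) (\<xi>xx t)) i
             - matvec n (Pmat \<theta> \<sigma> lam \<phi> \<alpha>0 \<beta>0 \<alpha>1 \<beta>1 n) (Rn n (\<xi> t)) i
             - Bvec \<theta> \<alpha>1 \<beta>1 n i * (\<alpha>1 * \<xi>x t 1 + \<beta>1 * \<xi> t 1)))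
          \<le> C * sqrt (hstep n) * (SUP t\<in>{\<rho>..T}. PC21_norm (\<xi> t) (\<xi>xx t)))"
proof -
  let ?I = "Iset \<theta> \<sigma> lam"
  have finI: "finite ?I" by (rule Iset_finite[OF assms(1-3)])
  obtain Bt where Bt: "Bt \<ge> 0" "\<forall>x\<in>{0..1}. \<bar>\<theta> x\<bar> \<le> Bt" using PCk_bounded[OF assms(1)] by blast
  obtain Bs where Bs: "Bs \<ge> 0" "\<forall>x\<in>{0..1}. \<bar>\<sigma> x\<bar> \<le> Bs" using PCk_bounded[OF assms(2)] by blast
  define Kc where "Kc = Bt + Bs"
  have Kc: "\<forall>x\<in>{0..1}. \<bar>\<theta> x\<bar> \<le> Kc \<and> \<bar>\<sigma> x\<bar> \<le> Kc" "0 \<le> Kc"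
    using Bt Bs unfolding Kc_def by force+
  obtain Kp where Kp: "Kp \<ge> 0" "\<forall>x\<in>{0..1}. (\<forall>s\<in>{0..1}. \<bar>\<phi> x s\<bar> \<le> Kp) \<and>
     (\<forall>s\<in>{0..1}. \<forall>s'\<in>{0..1}. \<bar>\<phi> x s - \<phi> x s'\<bar> \<le> Kp * \<bar>s - s'\<bar>) \<and> continuous_on {0..1} (\<phi> x)"
    using kernel_bound[OF assms(5)] by blast
  define Cst where "Cst = sqrt ((3 * Kc + 2 * Kp)\<^sup>2 + real (2 + 3 * card ?I) * ((12 + (3 + 2 * \<bar>\<beta>0\<bar> / \<bar>\<alpha>0\<bar>)) * Kc + 2 * Kp)\<^sup>2)"
  define C where "C = Cst + 1"
  define N where "N = 3 + nat \<lceil>2 * \<bar>\<beta>0\<bar> / \<bar>\<alpha>0\<bar> + 2 * \<bar>\<beta>1\<bar> / \<bar>\<alpha>1\<bar>\<rceil>"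
  have Cst0: "0 \<le> Cst" unfolding Cst_def by simp
  have C0: "C > 0" unfolding C_def using Cst0 by simp
  have NN: "real N \<ge> 3 + (2 * \<bar>\<beta>0\<bar> / \<bar>\<alpha>0\<bar> + 2 * \<bar>\<beta>1\<bar> / \<bar>\<alpha>1\<bar>)"
    unfolding N_def using real_nat_ceiling_ge[of "2 * \<bar>\<beta>0\<bar> / \<bar>\<alpha>0\<bar> + 2 * \<bar>\<beta>1\<bar> / \<bar>\<alpha>1\<bar>"] by simp
  have cond: "\<alpha> = 0 \<or> hstep n * \<bar>\<beta>\<bar> \<le> \<bar>\<alpha>\<bar> / 2"
    if "2 * \<bar>\<beta>\<bar> / \<bar>\<alpha>\<bar> \<le> real n + 1" for \<alpha> \<beta> :: real and n :: nat
  proof (cases "\<alpha> = 0")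
    case False
    then have "2 * \<bar>\<beta>\<bar> \<le> (real n + 1) * \<bar>\<alpha>\<bar>" using that by (simp add: divide_le_eq)
    then have "hstep n * \<bar>\<beta>\<bar> \<le> \<bar>\<alpha>\<bar> / 2" unfolding hstep_def by (simp add: field_simps)
    then show ?thesis by simp
  qed simp
  show ?thesis
  proof (intro exI[of _ C] conjI allI impI)
    show "C > 0" by (rule C0)
    fix \<xi> \<xi>x \<xi>xx :: "real \<Rightarrow> real \<Rightarrow> real"
    assume H: "(\<forall>t\<in>{\<rho>..T}. PC21 (\<xi> t) (\<xi>x t) (\<xi>xx t))
     \<and> (\<forall>s\<in>{\<rho>..T}. ((\<lambda>t. PC21_norm (\<lambda>x. \<xi> t x - \<xi> s x) (\<lambda>x. \<xi>xx t x - \<xi>xx s x)) \<longlongrightarrow> 0)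
                        (at s within {\<rho>..T}))
     \<and> (\<forall>t\<in>{\<rho>..T}. \<alpha>0 * \<xi>x t 0 + \<beta>0 * \<xi> t 0 = 0)
     \<and> (\<forall>t\<in>{\<rho>..T}. {x\<in>{0..1}. \<not> \<xi>xx t differentiable (at x within {0..1})} \<subseteq> Iset \<theta> \<sigma> lam)"
    then have pcs: "\<forall>t\<in>{\<rho>..T}. PC21 (\<xi> t) (\<xi>x t) (\<xi>xx t)"
      and cont: "\<forall>s\<in>{\<rho>..T}. ((\<lambda>t. PC21_norm (\<lambda>x. \<xi> t x - \<xi> s x) (\<lambda>x. \<xi>xx t x - \<xi>xx s x)) \<longlongrightarrow> 0)
                        (at s within {\<rho>..T})"
      and bcs: "\<forall>t\<in>{\<rho>..T}. \<alpha>0 * \<xi>x t 0 + \<beta>0 * \<xi> t 0 = 0"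
      and nds: "\<forall>t\<in>{\<rho>..T}. {x\<in>{0..1}. \<not> \<xi>xx t differentiable (at x within {0..1})} \<subseteq> Iset \<theta> \<sigma> lam"
      by blast+
    have bdd: "bdd_above ((\<lambda>t. PC21_norm (\<xi> t) (\<xi>xx t)) ` {\<rho>..T})" by (rule time_bdd[OF pcs cont])
    have ne: "{\<rho>..T} \<noteq> {}" using assms(9) by simp
    show "\<exists>N. \<forall>n\<ge>N.
          (SUP t\<in>{\<rho>..T}. norm2d n (\<lambda>i.
               Rn n (Pop \<theta> \<sigma> lam \<phi> (\<xi> t) (\<xi>x t) (\<xi>xx t)) i
             - matvec n (Pmat \<theta> \<sigma> lam \<phi> \<alpha>0 \<beta>0 \<alpha>1 \<beta>1 n) (Rn n (\<xi> t)) i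
             - Bvec \<theta> \<alpha>1 \<beta>1 n i * (\<alpha>1 * \<xi>x t 1 + \<beta>1 * \<xi> t 1)))
          \<le> C * sqrt (hstep n) * (SUP t\<in>{\<rho>..T}. PC21_norm (\<xi> t) (\<xi>xx t))"
    proof (intro exI[of _ N] allI impI)
      fix n assume nN: "N \<le> n"
      have n3: "3 \<le> n" using nN unfolding N_def by simp
      have rn: "real N \<le> real n" using nN by simp
      have q0: "0 \<le> 2 * \<bar>\<beta>0\<bar> / \<bar>\<alpha>0\<bar>" "0 \<le> 2 * \<bar>\<beta>1\<bar> / \<bar>\<alpha>1\<bar>" by simp_all
      have c0: "\<alpha>0 = 0 \<or> hstep n * \<bar>\<beta>0\<bar> \<le> \<bar>\<alpha>0\<bar> / 2" by (rule cond) (use NN rn q0 in linarith)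
      have c1: "\<alpha>1 = 0 \<or> hstep n * \<bar>\<beta>1\<bar> \<le> \<bar>\<alpha>1\<bar> / 2" by (rule cond) (use NN rn q0 in linarith)
      have nz: "3 * \<alpha>0 - 2 * hstep n * \<beta>0 \<noteq> 0" "3 * \<alpha>1 + 2 * hstep n * \<beta>1 \<noteq> 0" "\<alpha>0 - hstep n * \<beta>0 \<noteq> 0"
        using assms(6) n3 by auto
      have hs: "0 \<le> sqrt (hstep n)" by (simp add: hstep_def)
      show "(SUP t\<in>{\<rho>..T}. norm2d n (\<lambda>i.
               Rn n (Pop \<theta> \<sigma> lam \<phi> (\<xi> t) (\<xi>x t) (\<xi>xx t)) i
             - matvec n (Pmat \<theta> \<sigma> lam \<phi> \<alpha>0 \<beta>0 \<alpha>1 \<beta>1 n) (Rn n (\<xi> t)) i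
             - Bvec \<theta> \<alpha>1 \<beta>1 n i * (\<alpha>1 * \<xi>x t 1 + \<beta>1 * \<xi> t 1)))
          \<le> C * sqrt (hstep n) * (SUP t\<in>{\<rho>..T}. PC21_norm (\<xi> t) (\<xi>xx t))"
      proof (rule cSUP_least[OF ne])
        fix t assume t: "t \<in> {\<rho>..T}"
        have Mt: "PC21_norm (\<xi> t) (\<xi>xx t) \<le> (SUP t\<in>{\<rho>..T}. PC21_norm (\<xi> t) (\<xi>xx t))"
          by (rule cSUP_upper[OF t bdd])
        have M0: "0 \<le> PC21_norm (\<xi> t) (\<xi>xx t)" using PC21_facts(3) pcs t by blast
        have "norm2d n (\<lambda>i.
               Rn n (Pop \<theta> \<sigma> lam \<phi> (\<xi> t) (\<xi>x t) (\<xi>xx t)) i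
             - matvec n (Pmat \<theta> \<sigma> lam \<phi> \<alpha>0 \<beta>0 \<alpha>1 \<beta>1 n) (Rn n (\<xi> t)) i
             - Bvec \<theta> \<alpha>1 \<beta>1 n i * (\<alpha>1 * \<xi>x t 1 + \<beta>1 * \<xi> t 1))
            \<le> Cst * sqrt (hstep n) * PC21_norm (\<xi> t) (\<xi>xx t)"
          unfolding Cst_def
          by (rule per_t[OF _ _ _ finI Kc Kp n3 c0 c1 nz]) (use pcs bcs nds t in auto)
        also have "\<dots> \<le> C * sqrt (hstep n) * (SUP t\<in>{\<rho>..T}. PC21_norm (\<xi> t) (\<xi>xx t))"
          unfolding mult.assoc
          by (rule mult_mono) (use Cst0 C_def hs Mt M0 in \<open>auto intro: mult_left_mono\<close>)
        finally show "norm2d n (\<lambda>i.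
               Rn n (Pop \<theta> \<sigma> lam \<phi> (\<xi> t) (\<xi>x t) (\<xi>xx t)) i
             - matvec n (Pmat \<theta> \<sigma> lam \<phi> \<alpha>0 \<beta>0 \<alpha>1 \<beta>1 n) (Rn n (\<xi> t)) i
             - Bvec \<theta> \<alpha>1 \<beta>1 n i * (\<alpha>1 * \<xi>x t 1 + \<beta>1 * \<xi> t 1))
            \<le> C * sqrt (hstep n) * (SUP t\<in>{\<rho>..T}. PC21_norm (\<xi> t) (\<xi>xx t))" .
      qed
    qed
  qed
qed

end
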